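(* Fix $n\ge1$ and $k\ge0$. There is a finite $k$-graph whose topological realisation is homeomorphic to a wedge of $n$ copies of the $k$-sphere.
   Context: A $k$-graph is a countable small category $\Lambda$ with a functor $d:\Lambda\to\mathbb{N}^k$ ($\mathbb{N}^0=\{0\}$) such that, writing $\Lambda^n=d^{-1}(n)$, composition is a bijection from $\{(\mu,\nu)\in\Lambda^m\times\Lambda^n:s(\mu)=r(\nu)\}$ onto $\Lambda^{m+n}$. For $k\ge1$: $\lambda(m,n)$ is the unique $\beta\in\Lambda^{n-m}$ with $\lambda=\alpha\beta\gamma$, $d(\alpha)=m$; $\lceil t\rceil,\lfloor t\rfloor$ are coordinatewise ceiling/floor; $[0,m]=\{t\in\mathbb{R}^k:0\le t\le m\}$; the topological realisation $X_\Lambda$ is the quotient of $\bigsqcup_\lambda\{\lambda\}\times[0,d(\lambda)]$ by $(\mu,s)\sim(\nu,t)\iff\mu(\lfloor s\rfloor,\lceil s\rceil)=\nu(\lfloor t\rfloor,\lceil t\rceil)$ and $s-\lfloor s\rfloor=t-\lfloor t\rfloor$. For $k=0$, $X_\Lambda$ is the discrete space $\Lambda^0$. A wedge of spaces is their disjoint union with one chosen point from each identified to a single point. *)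

theory Defs
  imports "HOL-Analysis.Analysis"
begin

definition quot_class :: "'b topology \<Rightarrow> ('b \<Rightarrow> 'b \<Rightarrow> bool) \<Rightarrow> 'b \<Rightarrow> 'b set" where
  "quot_class X R x = {y \<in> topspace X. R x y}"

definition quotient_topology :: "'b topology \<Rightarrow> ('b \<Rightarrow> 'b \<Rightarrow> bool) \<Rightarrow> 'b set topology" where
  "quotient_topology X R =
     topology (\<lambda>U. U \<subseteq> quot_class X R ` topspace X \<and> openin X (\<Union>U))"

text \<open>A small category presented by its set of morphisms; objects are identified with
  identity morphisms, src / rng give the identities at source and range.
  Degrees lie in N^k, represented as functions nat => nat vanishing from k on.\<close>

record 'a kgraph =
  Mor  :: "'a set"
  src  :: "'a \<Rightarrow> 'a"
  rng  :: "'a \<Rightarrow> 'a"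
  comp :: "'a \<Rightarrow> 'a \<Rightarrow> 'a"
  deg  :: "'a \<Rightarrow> nat \<Rightarrow> nat"

definition in_Nk :: "nat \<Rightarrow> (nat \<Rightarrow> nat) \<Rightarrow> bool" where
  "in_Nk k m \<longleftrightarrow> (\<forall>i\<ge>k. m i = 0)"

definition small_category :: "'a kgraph \<Rightarrow> bool" where
  "small_category L \<longleftrightarrow>
     countable (Mor L) \<and>
     (\<forall>\<mu>\<in>Mor L. src L \<mu> \<in> Mor L \<and> rng L \<mu> \<in> Mor L) \<and>
     (\<forall>\<mu>\<in>Mor L. src L (src L \<mu>) = src L \<mu> \<and> rng L (src L \<mu>) = src L \<mu> \<and>
                 src L (rng L \<mu>) = rng L \<mu> \<and> rng L (rng L \<mu>) = rng L \<mu>) \<and>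
     (\<forall>\<mu>\<in>Mor L. comp L \<mu> (src L \<mu>) = \<mu> \<and> comp L (rng L \<mu>) \<mu> = \<mu>) \<and>
     (\<forall>\<mu>\<in>Mor L. \<forall>\<nu>\<in>Mor L. src L \<mu> = rng L \<nu> \<longrightarrow>
        comp L \<mu> \<nu> \<in> Mor L \<and> src L (comp L \<mu> \<nu>) = src L \<nu> \<and> rng L (comp L \<mu> \<nu>) = rng L \<mu>) \<and>
     (\<forall>\<mu>\<in>Mor L. \<forall>\<nu>\<in>Mor L. \<forall>\<rho>\<in>Mor L. src L \<mu> = rng L \<nu> \<longrightarrow> src L \<nu> = rng L \<rho> \<longrightarrow>
        comp L (comp L \<mu> \<nu>) \<rho> = comp L \<mu> (comp L \<nu> \<rho>))"

definition is_kgraph :: "nat \<Rightarrow> 'a kgraph \<Rightarrow> bool" where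
  "is_kgraph k L \<longleftrightarrow>
     small_category L \<and>
     (\<forall>\<mu>\<in>Mor L. in_Nk k (deg L \<mu>)) \<and>
     \<comment> \<open>d is a functor to N^k\<close>
     (\<forall>\<mu>\<in>Mor L. deg L (src L \<mu>) = (\<lambda>i. 0) \<and> deg L (rng L \<mu>) = (\<lambda>i. 0)) \<and>
     (\<forall>\<mu>\<in>Mor L. \<forall>\<nu>\<in>Mor L. src L \<mu> = rng L \<nu> \<longrightarrow>
        deg L (comp L \<mu> \<nu>) = (\<lambda>i. deg L \<mu> i + deg L \<nu> i)) \<and>
     \<comment> \<open>unique factorisation: composition is a bijection onto Lambda^(m+n)\<close>
     (\<forall>l\<in>Mor L. \<forall>m n. in_Nk k m \<longrightarrow> in_Nk k n \<longrightarrow> deg L l = (\<lambda>i. m i + n i) \<longrightarrow>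
        (\<exists>!p. fst p \<in> Mor L \<and> snd p \<in> Mor L \<and> src L (fst p) = rng L (snd p) \<and>
                    deg L (fst p) = m \<and> deg L (snd p) = n \<and> l = comp L (fst p) (snd p)))"

definition vertices :: "'a kgraph \<Rightarrow> 'a set" where
  "vertices L = {\<mu> \<in> Mor L. deg L \<mu> = (\<lambda>i. 0)}"

definition finite_kgraph :: "'a kgraph \<Rightarrow> bool" where
  "finite_kgraph L \<longleftrightarrow> (\<forall>n. finite {\<mu> \<in> Mor L. deg L \<mu> = n})"

text \<open>lambda(m,n): the unique beta of degree n - m with lambda = alpha beta gamma, d(alpha) = m.\<close>
definition seg :: "'a kgraph \<Rightarrow> 'a \<Rightarrow> (nat \<Rightarrow> nat) \<Rightarrow> (nat \<Rightarrow> nat) \<Rightarrow> 'a" where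
  "seg L l m n = (THE \<beta>. \<beta> \<in> Mor L \<and> deg L \<beta> = (\<lambda>i. n i - m i) \<and>
      (\<exists>\<alpha>\<in>Mor L. \<exists>\<gamma>\<in>Mor L. deg L \<alpha> = m \<and> src L \<alpha> = rng L \<beta> \<and> src L \<beta> = rng L \<gamma> \<and>
          l = comp L (comp L \<alpha> \<beta>) \<gamma>))"

definition flr :: "(nat \<Rightarrow> real) \<Rightarrow> nat \<Rightarrow> nat" where
  "flr t = (\<lambda>i. nat \<lfloor>t i\<rfloor>)"

definition cel :: "(nat \<Rightarrow> real) \<Rightarrow> nat \<Rightarrow> nat" where
  "cel t = (\<lambda>i. nat \<lceil>t i\<rceil>)"

text \<open>The cube [0, m] in R^k (points of R^k are functions nat => real vanishing from k on).\<close>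
definition cube :: "nat \<Rightarrow> (nat \<Rightarrow> nat) \<Rightarrow> (nat \<Rightarrow> real) topology" where
  "cube k m = subtopology (Euclidean_space k) {t. \<forall>i<k. 0 \<le> t i \<and> t i \<le> real (m i)}"

definition real_rel :: "'a kgraph \<Rightarrow> ('a \<times> (nat \<Rightarrow> real)) \<Rightarrow> ('a \<times> (nat \<Rightarrow> real)) \<Rightarrow> bool" where
  "real_rel L p q \<longleftrightarrow>
     (case p of (\<mu>, s) \<Rightarrow> case q of (\<nu>, t) \<Rightarrow>
        seg L \<mu> (flr s) (cel s) = seg L \<nu> (flr t) (cel t) \<and>
        (\<lambda>i. s i - of_int \<lfloor>s i\<rfloor>) = (\<lambda>i. t i - of_int \<lfloor>t i\<rfloor>))"

text \<open>Topological realisation. For k = 0 it is the discrete space Lambda^0, encoded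
  (to have a uniform type) via the injection v |-> {(v, 0)}.\<close>
definition realisation :: "nat \<Rightarrow> 'a kgraph \<Rightarrow> ('a \<times> (nat \<Rightarrow> real)) set topology" where
  "realisation k L =
     (if k = 0 then discrete_topology ((\<lambda>v. {(v, \<lambda>i. 0)}) ` vertices L)
      else quotient_topology (sum_topology (\<lambda>l. cube k (deg L l)) (Mor L)) (real_rel L))"

definition sphere_base :: "nat \<Rightarrow> real" where
  "sphere_base = (\<lambda>i. if i = 0 then 1 else 0)"

definition wedge_rel :: "(nat \<times> (nat \<Rightarrow> real)) \<Rightarrow> (nat \<times> (nat \<Rightarrow> real)) \<Rightarrow> bool" where
  "wedge_rel p q \<longleftrightarrow> p = q \<or> (snd p = sphere_base \<and> snd q = sphere_base)"

definition sphere_wedge :: "nat \<Rightarrow> nat \<Rightarrow> (nat \<times> (nat \<Rightarrow> real)) set topology" where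
  "sphere_wedge n k = quotient_topology (sum_topology (\<lambda>i. nsphere k) {..<n}) wedge_rel"

end

theory Submission
  imports Defs
begin

lemma quot_main:
  assumes cX: "compact_space X" and f: "continuous_map X Y f" and HY: "Hausdorff_space Y"
    and R: "\<And>p q. p \<in> topspace X \<Longrightarrow> q \<in> topspace X \<Longrightarrow> R p q \<longleftrightarrow> f p = f q"
  shows "quotient_topology X R homeomorphic_space subtopology Y (f ` topspace X)"
proof -
  define C where "C = quot_class X R"
  have Cx: "C x = {y \<in> topspace X. f y = f x}" if "x \<in> topspace X" for x
    using R that by (auto simp: C_def quot_class_def)
  have xC: "x \<in> C x" if "x \<in> topspace X" for x using Cx that by auto
  define P where "P = (\<lambda>U. U \<subseteq> C ` topspace X \<and> openin X (\<Union>U))"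
  have istop: "istopology P"
    unfolding istopology_def P_def
  proof (rule conjI; intro allI impI)
    fix S T assume S: "S \<subseteq> C ` topspace X \<and> openin X (\<Union>S)" and T: "T \<subseteq> C ` topspace X \<and> openin X (\<Union>T)"
    have "\<Union>(S \<inter> T) = \<Union>S \<inter> \<Union>T"
    proof
      show "\<Union>S \<inter> \<Union>T \<subseteq> \<Union>(S \<inter> T)"
      proof
        fix z assume "z \<in> \<Union>S \<inter> \<Union>T"
        then obtain A B where AB: "z \<in> A" "A \<in> S" "z \<in> B" "B \<in> T" by auto
        then obtain a b where ab: "a \<in> topspace X" "A = C a" "b \<in> topspace X" "B = C b" using S T by blast
        then have "A = B" using AB Cx by auto
        then show "z \<in> \<Union>(S \<inter> T)" using AB by auto
      qed
    qed auto
    then show "S \<inter> T \<subseteq> C ` topspace X \<and> openin X (\<Union>(S \<inter> T))" using S T by auto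
  next
    fix K assume K: "\<forall>S\<in>K. S \<subseteq> C ` topspace X \<and> openin X (\<Union>S)"
    have "\<Union>(\<Union>K) = \<Union>((\<lambda>S. \<Union>S) ` K)" by auto
    moreover have "openin X (\<Union>((\<lambda>S. \<Union>S) ` K))" using K by (intro openin_Union) auto
    ultimately show "\<Union>K \<subseteq> C ` topspace X \<and> openin X (\<Union>(\<Union>K))" using K by auto
  qed
  define Q where "Q = quotient_topology X R"
  have oQ: "openin Q = P" unfolding Q_def quotient_topology_def P_def[symmetric] C_def[symmetric]
    using istop by simp
  have tQ: "topspace Q = C ` topspace X"
  proof -
    have "P (C ` topspace X)" unfolding P_def
    proof
      have "\<Union>(C ` topspace X) = topspace X" using Cx xC by auto
      then show "openin X (\<Union>(C ` topspace X))" by simp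
    qed simp
    then have o: "openin Q (C ` topspace X)" using oQ by simp
    have "topspace Q \<subseteq> C ` topspace X"
    proof
      fix A assume "A \<in> topspace Q"
      then obtain U where "openin Q U" "A \<in> U" unfolding topspace_def by blast
      then show "A \<in> C ` topspace X" using oQ P_def by auto
    qed
    then show ?thesis using openin_subset[OF o] by blast
  qed
  define h where "h = (\<lambda>A. f (SOME x. x \<in> A))"
  have hC: "h (C x) = f x" if "x \<in> topspace X" for x
  proof -
    have "(SOME y. y \<in> C x) \<in> C x" using xC[OF that] by (rule someI)
    then show ?thesis unfolding h_def using Cx[OF that] by auto
  qed
  have fY: "f x \<in> topspace Y" if "x \<in> topspace X" for x
    using f that by (auto simp: continuous_map_def)
  have contQ: "continuous_map X Q C"
    unfolding continuous_map_def
  proof (intro conjI allI impI)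
    show "C \<in> topspace X \<rightarrow> topspace Q" using tQ by auto
    fix U assume "openin Q U"
    then have U: "U \<subseteq> C ` topspace X" "openin X (\<Union>U)" using oQ P_def by auto
    have "{x \<in> topspace X. C x \<in> U} = \<Union>U"
    proof
      show "\<Union>U \<subseteq> {x \<in> topspace X. C x \<in> U}"
      proof
        fix z assume "z \<in> \<Union>U"
        then obtain A where "z \<in> A" "A \<in> U" by auto
        then obtain a where "a \<in> topspace X" "A = C a" using U by blast
        then show "z \<in> {x \<in> topspace X. C x \<in> U}" using \<open>z \<in> A\<close> \<open>A \<in> U\<close> Cx by auto
      qed
    qed (use xC in auto)
    then show "openin X {x \<in> topspace X. C x \<in> U}" using U by simp
  qed
  have cQ: "compact_space Q"
  proof -
    have "compactin Q (C ` topspace X)"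
      using cX contQ compact_space_def image_compactin by blast
    then show ?thesis using tQ compact_space_def by metis
  qed
  have conth: "continuous_map Q Y h"
    unfolding continuous_map_def
  proof (intro conjI allI impI)
    show "h \<in> topspace Q \<rightarrow> topspace Y" using tQ hC fY by auto
    fix V assume V: "openin Y V"
    have eq: "\<Union>{A \<in> topspace Q. h A \<in> V} = {x \<in> topspace X. f x \<in> V}"
      using tQ hC xC Cx by auto
    have "openin X {x \<in> topspace X. f x \<in> V}" using f V by (simp add: continuous_map_def)
    then show "openin Q {A \<in> topspace Q. h A \<in> V}"
      unfolding oQ P_def using eq tQ by auto
  qed
  have hom: "homeomorphic_map Q (subtopology Y (f ` topspace X)) h"
  proof (rule bijective_closed_imp_homeomorphic_map)
    show c2: "continuous_map Q (subtopology Y (f ` topspace X)) h"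
      using conth tQ hC by (intro continuous_map_into_subtopology) auto
    show "closed_map Q (subtopology Y (f ` topspace X)) h"
      by (rule continuous_imp_closed_map[OF c2 cQ]) (rule Hausdorff_space_subtopology[OF HY])
    show "h ` topspace Q = topspace (subtopology Y (f ` topspace X))"
    proof -
      have e1: "h ` topspace Q = f ` topspace X" unfolding tQ image_image by (rule image_cong) (simp_all add: hC)
      have e2: "topspace (subtopology Y (f ` topspace X)) = f ` topspace X" using fY by auto
      show ?thesis using e1 e2 by simp
    qed
    show "inj_on h (topspace Q)"
      using tQ hC Cx by (auto simp: inj_on_def)
  qed
  then show ?thesis unfolding Q_def using homeomorphic_map_imp_homeomorphic_space by blast
qed


lemma cont_Max0:
  assumes "finite A" "\<And>j. j \<in> A \<Longrightarrow> continuous_map X euclideanreal (g j)"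
  shows "continuous_map X euclideanreal (\<lambda>x. Max (insert 0 ((\<lambda>j. g j x) ` A)))"
  using assms
proof (induction A rule: finite_induct)
  case empty then show ?case by simp
next
  case (insert a A)
  have eq: "Max (insert 0 ((\<lambda>j. g j x) ` insert a A)) = max (g a x) (Max (insert 0 ((\<lambda>j. g j x) ` A)))" for x
  proof -
    have e: "insert 0 ((\<lambda>j. g j x) ` insert a A) = insert (g a x) (insert 0 ((\<lambda>j. g j x) ` A))" by auto
    show ?thesis unfolding e using insert.hyps by (subst Max_insert) auto
  qed
  show ?case unfolding eq using insert by (intro continuous_map_real_max) auto
qed

lemma cont_Min0:
  assumes "finite A" "\<And>j. j \<in> A \<Longrightarrow> continuous_map X euclideanreal (g j)"
  shows "continuous_map X euclideanreal (\<lambda>x. Min (insert 0 ((\<lambda>j. g j x) ` A)))"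
  using assms
proof (induction A rule: finite_induct)
  case empty then show ?case by simp
next
  case (insert a A)
  have eq: "Min (insert 0 ((\<lambda>j. g j x) ` insert a A)) = min (g a x) (Min (insert 0 ((\<lambda>j. g j x) ` A)))" for x
  proof -
    have e: "insert 0 ((\<lambda>j. g j x) ` insert a A) = insert (g a x) (insert 0 ((\<lambda>j. g j x) ` A))" by auto
    show ?thesis unfolding e using insert.hyps by (subst Min_insert) auto
  qed
  show ?case unfolding eq using insert by (intro continuous_map_real_min) auto
qed

lemma compact_sum_finite:
  assumes "finite I" "\<And>i. i \<in> I \<Longrightarrow> compact_space (X i)"
  shows "compact_space (sum_topology X I)"
proof -
  have "topspace (sum_topology X I) = \<Union>((\<lambda>i. (\<lambda>x. (i,x)) ` topspace (X i)) ` I)" by auto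
  moreover have "compactin (sum_topology X I) (\<Union>((\<lambda>i. (\<lambda>x. (i,x)) ` topspace (X i)) ` I))"
  proof (rule compactin_Union)
    show "finite ((\<lambda>i. (\<lambda>x. (i,x)) ` topspace (X i)) ` I)" using assms by simp
    fix S assume "S \<in> (\<lambda>i. (\<lambda>x. (i,x)) ` topspace (X i)) ` I"
    then obtain i where i: "i \<in> I" "S = (\<lambda>x. (i,x)) ` topspace (X i)" by auto
    show "compactin (sum_topology X I) S" unfolding i(2)
      by (rule image_compactin[OF _ continuous_map_component_injection[OF i(1)]])
         (use assms i in \<open>simp add: compact_space_def\<close>)
  qed
  ultimately show ?thesis by (simp add: compact_space_def)
qed

lemma continuous_map_from_sum:
  assumes "\<And>i. i \<in> I \<Longrightarrow> continuous_map (X i) Y (\<lambda>x. f (i,x))"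
  shows "continuous_map (sum_topology X I) Y f"
  unfolding continuous_map_def
proof (intro conjI allI impI)
  show "f \<in> topspace (sum_topology X I) \<rightarrow> topspace Y"
    using assms by (force simp: continuous_map_def Pi_iff)
  fix U assume U: "openin Y U"
  show "openin (sum_topology X I) {x \<in> topspace (sum_topology X I). f x \<in> U}"
    unfolding openin_sum_topology
  proof (intro conjI ballI)
    fix i assume i: "i \<in> I"
    have "{x. (i, x) \<in> {x \<in> topspace (sum_topology X I). f x \<in> U}} = {x \<in> topspace (X i). f (i,x) \<in> U}"
      using i by auto
    then show "openin (X i) {x. (i, x) \<in> {x \<in> topspace (sum_topology X I). f x \<in> U}}"
      using assms[OF i] U by (simp add: continuous_map_def)
  qed auto
qed

lemma Hausdorff_powertop: "Hausdorff_space (powertop_real UNIV)"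
  by (simp add: Hausdorff_space_product_topology)

lemma compact_nsphere: "compact_space (nsphere k)"
proof -
  define S where "S = {x::nat\<Rightarrow>real. (\<Sum>i\<le>k. x i ^ 2) = 1 \<and> (\<forall>i>k. x i = 0)}"
  have "S \<subseteq> UNIV \<rightarrow>\<^sub>E {-1..1}"
  proof
    fix x assume x: "x \<in> S"
    have "\<bar>x i\<bar> \<le> 1" for i
    proof (cases "i \<le> k")
      case True
      have "x i ^ 2 \<le> (\<Sum>i\<le>k. x i ^ 2)"
        using True by (intro member_le_sum) auto
      then have "x i ^ 2 \<le> 1" using x S_def by simp
      then show ?thesis by (simp add: abs_square_le_1)
    next
      case False then show ?thesis using x S_def by simp
    qed
    then show "x \<in> UNIV \<rightarrow>\<^sub>E {-1..1}" by (auto simp: abs_le_iff)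
  qed
  moreover have "closedin (powertop_real UNIV) S"
  proof -
    have c1: "closedin (powertop_real UNIV) {x. (\<Sum>i\<le>k. x i ^ 2) = 1}"
    proof -
      have "closedin (powertop_real UNIV) {x \<in> topspace (powertop_real UNIV). (\<Sum>i\<le>k. x i ^ 2) \<in> {1}}"
        by (rule closedin_continuous_map_preimage[where Y=euclideanreal]) (auto intro!: continuous_intros)
      then show ?thesis by simp
    qed
    have c2: "closedin (powertop_real UNIV) {x. x i = 0}" for i
    proof -
      have "closedin (powertop_real UNIV) {x \<in> topspace (powertop_real UNIV). x i \<in> {0}}"
        by (rule closedin_continuous_map_preimage[where Y=euclideanreal]) (auto intro!: continuous_intros)
      then show ?thesis by simp
    qed
    have eqS: "S = {x. (\<Sum>i\<le>k. x i ^ 2) = 1} \<inter> (\<Inter>i\<in>{i. i>k}. {x. x i = 0})"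
      unfolding S_def by auto
    have c3: "closedin (powertop_real UNIV) (\<Inter>i\<in>{i. i>k}. {x. x i = 0})"
      by (rule closedin_INT) (auto intro: c2)
    show ?thesis unfolding eqS by (rule closedin_Int[OF c1 c3])
  qed
  moreover have "compactin (powertop_real UNIV) (UNIV \<rightarrow>\<^sub>E {-1..1::real})"
    by (simp add: compactin_PiE)
  ultimately have "compactin (powertop_real UNIV) S"
    by (metis closed_compactin)
  then show ?thesis unfolding nsphere S_def[symmetric] by (rule compact_space_subtopology)
qed


definition nu :: "nat \<Rightarrow> (nat \<Rightarrow> real) \<Rightarrow> real" where
  "nu k x = Max (insert 0 (x ` {2..k})) - Min (insert 0 (x ` {2..k}))"

definition rho :: "nat \<Rightarrow> (nat \<Rightarrow> real) \<Rightarrow> real" where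
  "rho k x = \<bar>x 0\<bar> + \<bar>x 1\<bar> + nu k x"

definition Ext :: "nat \<Rightarrow> nat \<Rightarrow> (nat \<Rightarrow> real) \<Rightarrow> (nat \<Rightarrow> real)" where
  "Ext k i z = z(Suc k := real i * (1 - z 0))"

definition Phi :: "nat \<Rightarrow> nat \<times> (nat \<Rightarrow> real) \<Rightarrow> (nat \<Rightarrow> real)" where
  "Phi k p = Ext k (fst p) (\<lambda>j. snd p j / rho k (snd p))"

lemma Max0_ge: fixes x :: "nat \<Rightarrow> real" shows "j \<in> {2..k} \<Longrightarrow> x j \<le> Max (insert 0 (x ` {2..k}))"
  by (intro Max_ge) auto
lemma Min0_le: fixes x :: "nat \<Rightarrow> real" shows "j \<in> {2..k} \<Longrightarrow> Min (insert 0 (x ` {2..k})) \<le> x j"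
  by (intro Min_le) auto
lemma Max0_ge0: fixes x :: "nat \<Rightarrow> real" shows "0 \<le> Max (insert 0 (x ` {2..k}))"
  by (intro Max_ge) auto
lemma Min0_le0: fixes x :: "nat \<Rightarrow> real" shows "Min (insert 0 (x ` {2..k})) \<le> 0"
  by (intro Min_le) auto

lemma nu_nonneg: "0 \<le> nu k x"
  unfolding nu_def using Max0_ge0[of x k] Min0_le0[of x k] by linarith

lemma nu_zero: assumes "nu k x = 0" "j \<in> {2..k}" shows "x j = 0"
  using assms(1) Max0_ge[OF assms(2), of x] Min0_le[OF assms(2), of x] Max0_ge0[of x k] Min0_le0[of x k]
  unfolding nu_def by linarith

lemma topspace_nsphere': "topspace (nsphere k) = {x. (\<Sum>i\<le>k. x i ^ 2) = 1 \<and> (\<forall>i>k. x i = 0)}"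
  by (simp add: nsphere)

lemma rho_pos:
  assumes "x \<in> topspace (nsphere k)"
  shows "0 < rho k x"
proof (rule ccontr)
  assume "\<not> 0 < rho k x"
  then have z: "x 0 = 0" "x 1 = 0" "nu k x = 0" using nu_nonneg[of k x] by (auto simp: rho_def)
  have "x j = 0" for j
  proof -
    have "j = 0 \<or> j = 1 \<or> j \<in> {2..k} \<or> j > k" by auto
    then show ?thesis using z nu_zero[OF z(3)] assms by (auto simp: topspace_nsphere')
  qed
  then show False using assms by (simp add: topspace_nsphere')
qed

lemma nu_base: "nu k sphere_base = 0"
proof -
  have e: "insert 0 (sphere_base ` {2..k}) = {0}" by (auto simp: sphere_base_def)
  show ?thesis unfolding nu_def e by simp
qed

lemma rho_base: "rho k sphere_base = 1"
  using nu_base[of k] by (simp add: rho_def sphere_base_def)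

lemma base_in: "sphere_base \<in> topspace (nsphere k)"
  using in_topspace_nsphere[of k] by (simp add: sphere_base_def)

lemma Phi_base: "Phi k (i, sphere_base) = sphere_base"
  unfolding Phi_def Ext_def using rho_base[of k] by (auto simp: sphere_base_def fun_eq_iff)

lemma Psi0_one:
  assumes x: "x \<in> topspace (nsphere k)" and e: "x 0 / rho k x = 1"
  shows "x = sphere_base"
proof -
  have r: "0 < rho k x" by (rule rho_pos[OF x])
  then have "x 0 = rho k x" using e by (simp add: field_simps)
  then have z: "x 1 = 0" "nu k x = 0" "x 0 \<ge> 0" using nu_nonneg[of k x] by (auto simp: rho_def)
  have xj: "x j = 0" if "j \<noteq> 0" for j
  proof -
    have "j = 1 \<or> j \<in> {2..k} \<or> j > k" using that by auto
    then show ?thesis using z nu_zero[OF z(2)] x by (auto simp: topspace_nsphere')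
  qed
  have "(\<Sum>i\<le>k. x i ^ 2) = 1" using x by (simp add: topspace_nsphere')
  moreover have "(\<Sum>i\<le>k. x i ^ 2) = x 0 ^ 2"
  proof -
    have "(\<Sum>i\<le>k. x i ^ 2) = (\<Sum>i\<in>{0}. x i ^ 2)" using xj by (intro sum.mono_neutral_right) auto
    then show ?thesis by simp
  qed
  ultimately have "x 0 = 1" using z(3) by (simp add: power2_eq_1_iff)
  then show ?thesis using xj by (auto simp: sphere_base_def)
qed

lemma Phi_inj:
  assumes x: "x \<in> topspace (nsphere k)" and y: "y \<in> topspace (nsphere k)"
    and e: "Phi k (i, x) = Phi k (j, y)"
  shows "(i = j \<and> x = y) \<or> (x = sphere_base \<and> y = sphere_base)"
proof -
  have rx: "0 < rho k x" and ry: "0 < rho k y" using rho_pos x y by auto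
  have ek: "x (Suc k) = 0" "y (Suc k) = 0" using x y by (auto simp: topspace_nsphere')
  have c: "x m / rho k x = y m / rho k y" for m
  proof (cases "m = Suc k")
    case True then show ?thesis using ek by simp
  next
    case False
    then show ?thesis using fun_cong[OF e, of m] by (simp add: Phi_def Ext_def)
  qed
  define a where "a = rho k x / rho k y"
  have a0: "a > 0" using rx ry by (simp add: a_def)
  have xa: "x m = a * y m" for m using c[of m] rx ry by (simp add: a_def field_simps)
  have "(\<Sum>i\<le>k. x i ^ 2) = a^2 * (\<Sum>i\<le>k. y i ^ 2)"
    by (simp add: xa power_mult_distrib sum_distrib_left)
  then have "a^2 = 1" using x y by (simp add: topspace_nsphere')
  then have "a = 1" using a0 by (simp add: power2_eq_1_iff)
  then have xy: "x = y" using xa by auto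
  have "real i * (1 - x 0 / rho k x) = real j * (1 - y 0 / rho k y)"
    using fun_cong[OF e, of "Suc k"] by (simp add: Phi_def Ext_def)
  then have "i = j \<or> x 0 / rho k x = 1" using xy by auto
  then show ?thesis using xy Psi0_one[OF x] by auto
qed

lemma wedge_iff:
  assumes "p \<in> topspace (sum_topology (\<lambda>i. nsphere k) {..<n})"
    and "q \<in> topspace (sum_topology (\<lambda>i. nsphere k) {..<n})"
  shows "wedge_rel p q \<longleftrightarrow> Phi k p = Phi k q"
proof
  assume "wedge_rel p q"
  then show "Phi k p = Phi k q"
    unfolding wedge_rel_def by (metis Phi_base prod.collapse)
next
  assume "Phi k p = Phi k q"
  then show "wedge_rel p q" using assms Phi_inj[of "snd p" k "snd q" "fst p" "fst q"]
    by (auto simp: wedge_rel_def prod_eq_iff)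
qed

lemma cont_rho: "continuous_map (nsphere k) euclideanreal (rho k)"
proof -
  have "continuous_map (nsphere k) euclideanreal (\<lambda>x. rho k x)"
    unfolding rho_def nu_def
    by (intro continuous_intros cont_Max0[where g="\<lambda>j x. x j", simplified] cont_Min0[where g="\<lambda>j x. x j", simplified] continuous_map_nsphere_projection) auto
  then show ?thesis by simp
qed

lemma cont_Phi: "continuous_map (sum_topology (\<lambda>i. nsphere k) {..<n}) (powertop_real UNIV) (Phi k)"
proof (rule continuous_map_from_sum)
  fix i
  show "continuous_map (nsphere k) (powertop_real UNIV) (\<lambda>x. Phi k (i, x))"
    unfolding continuous_map_componentwise_UNIV
  proof
    fix m
    have d: "continuous_map (nsphere k) euclideanreal (\<lambda>x. x m / rho k x)" for m
      by (intro continuous_map_real_divide cont_rho continuous_map_nsphere_projection) (auto dest!: rho_pos)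
    show "continuous_map (nsphere k) euclideanreal (\<lambda>x. Phi k (i, x) m)"
    proof (cases "m = Suc k")
      case True
      then show ?thesis unfolding Phi_def Ext_def
        by (simp, intro continuous_intros d)
    next
      case False
      then show ?thesis unfolding Phi_def Ext_def using d by simp
    qed
  qed
qed

theorem wedge_homeo:
  "sphere_wedge n k homeomorphic_space
     subtopology (powertop_real UNIV) (Phi k ` topspace (sum_topology (\<lambda>i. nsphere k) {..<n}))"
  unfolding sphere_wedge_def
  by (rule quot_main[OF compact_sum_finite cont_Phi Hausdorff_powertop])
     (auto simp: compact_nsphere wedge_iff simp del: topspace_sum_topology)


type_synonym elt = "(nat \<Rightarrow> nat) \<times> nat \<times> nat"

definition zr :: "nat \<Rightarrow> nat" where "zr = (\<lambda>_. 0)"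
definition one :: "nat \<Rightarrow> nat \<Rightarrow> nat" where "one k = (\<lambda>j. if j < k then 1 else 0)"
definition zA :: elt where "zA = (zr, 0, 0)"

definition Pset :: "nat \<Rightarrow> nat \<Rightarrow> elt set" where
  "Pset k n = {p. fst p \<le> one k \<and>
     (if fst p = zr then (fst (snd p) = 0 \<and> snd (snd p) = 0) \<or> (fst (snd p) = 1 \<and> snd (snd p) < n)
      else if fst p = one k then fst (snd p) \<le> 1 \<and> snd (snd p) < n
      else fst (snd p) = 0 \<and> snd (snd p) < n)}"

definition lep :: "elt \<Rightarrow> elt \<Rightarrow> bool" where
  "lep p q \<longleftrightarrow> p = q \<or> (fst p \<le> fst q \<and> fst p \<noteq> fst q \<and> (p = zA \<or> snd (snd p) = snd (snd q)))"

definition Emor :: "nat \<Rightarrow> nat \<Rightarrow> (elt \<times> elt) set" where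
  "Emor k n = {\<mu>. fst \<mu> \<in> Pset k n \<and> snd \<mu> \<in> Pset k n \<and> lep (fst \<mu>) (snd \<mu>)}"

definition pick :: "elt \<Rightarrow> elt \<Rightarrow> (nat \<Rightarrow> nat) \<Rightarrow> elt" where
  "pick p r c = (if c = fst p then p else if c = fst r then r else (c, 0, snd (snd r)))"

definition L0 :: "nat \<Rightarrow> nat \<Rightarrow> (elt \<times> elt) kgraph" where
  "L0 k n = \<lparr>Mor = Emor k n, src = (\<lambda>\<mu>. (snd \<mu>, snd \<mu>)), rng = (\<lambda>\<mu>. (fst \<mu>, fst \<mu>)),
     comp = (\<lambda>\<mu> \<nu>. (fst \<mu>, snd \<nu>)), deg = (\<lambda>\<mu> j. fst (snd \<mu>) j - fst (fst \<mu>) j)\<rparr>"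

lemma zr_ne_one: "0 < k \<Longrightarrow> zr \<noteq> one k"
  by (auto simp: zr_def one_def fun_eq_iff)

lemma lep_refl[simp]: "lep p p" by (simp add: lep_def)

lemma lep_le: "lep p q \<Longrightarrow> fst p \<le> fst q"
  by (auto simp: lep_def)

lemma lep_eq: "lep p q \<Longrightarrow> fst p = fst q \<Longrightarrow> p = q"
  by (auto simp: lep_def)

lemma lep_trans: "lep p q \<Longrightarrow> lep q r \<Longrightarrow> lep p r"
proof -
  assume pq: "lep p q" and qr: "lep q r"
  show "lep p r"
  proof (cases "p = q \<or> q = r")
    case True then show ?thesis using pq qr by auto
  next
    case False
    then have a: "fst p \<le> fst q" "fst p \<noteq> fst q" "p = zA \<or> snd (snd p) = snd (snd q)"
      and b: "fst q \<le> fst r" "fst q \<noteq> fst r" "q = zA \<or> snd (snd q) = snd (snd r)"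
      using pq qr by (auto simp: lep_def)
    have "fst p \<noteq> fst r" using a b by (metis order_antisym)
    moreover have "q \<noteq> zA"
    proof
      assume "q = zA"
      then have "fst q = zr" by (simp add: zA_def)
      then have "fst p = zr" using a(1) by (auto simp: zr_def le_fun_def)
      then show False using a(2) \<open>fst q = zr\<close> by simp
    qed
    ultimately show ?thesis using a b by (auto simp: lep_def)
  qed
qed

lemma Pset_le_one: "p \<in> Pset k n \<Longrightarrow> fst p \<le> one k"
  by (simp add: Pset_def)

lemma le_one_beyond: "h \<le> one k \<Longrightarrow> j \<ge> k \<Longrightarrow> h j = 0"
  by (auto simp: le_fun_def one_def dest: spec[of _ j])

lemma pick_props:
  assumes k: "0 < k" and p: "p \<in> Pset k n" and r: "r \<in> Pset k n" and pr: "lep p r"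
    and c1: "fst p \<le> c" and c2: "c \<le> fst r"
  shows "pick p r c \<in> Pset k n" "lep p (pick p r c)" "lep (pick p r c) r" "fst (pick p r c) = c"
proof -
  show "fst (pick p r c) = c" by (auto simp: pick_def)
  have "pick p r c \<in> Pset k n \<and> lep p (pick p r c) \<and> lep (pick p r c) r"
  proof (cases "c = fst p \<or> c = fst r")
    case True then show ?thesis using p r pr by (auto simp: pick_def)
  next
    case False
    then have cp: "c \<noteq> fst p" "c \<noteq> fst r" by auto
    have r1: "fst r \<le> one k" using r by (simp add: Pset_def)
    have cz: "c \<noteq> zr"
    proof
      assume "c = zr" then have "fst p \<le> zr" using c1 by simp
      then have "fst p = zr" by (auto simp: le_fun_def zr_def fun_eq_iff)
      then show False using cp \<open>c = zr\<close> by simp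
    qed
    have co: "c \<noteq> one k"
    proof
      assume "c = one k" then have "fst r = one k" using c2 r1 by (simp add: order_antisym)
      then show False using cp \<open>c = one k\<close> by simp
    qed
    have pr': "p \<noteq> r"
    proof
      assume "p = r"
      then have "c = fst p" using c1 c2 by (simp add: order_antisym)
      then show False using cp by simp
    qed
    then have pr2: "p = zA \<or> snd (snd p) = snd (snd r)" using pr by (simp add: lep_def)
    have rz: "fst r \<noteq> zr"
    proof
      assume "fst r = zr"
      then have "c \<le> zr" using c2 by simp
      then have "c = zr" by (auto simp: le_fun_def zr_def fun_eq_iff)
      then show False using cz by simp
    qed
    have rn: "snd (snd r) < n" using r rz by (auto simp: Pset_def split: if_splits)
    have "(c, 0, snd (snd r)) \<in> Pset k n"
      using cz co rn c2 r1 by (auto simp: Pset_def)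
    moreover have "lep p (c, 0, snd (snd r))" using c1 cp pr2 by (auto simp: lep_def)
    moreover have "lep (c, 0, snd (snd r)) r" using c2 cp by (auto simp: lep_def)
    ultimately show ?thesis using cp by (simp add: pick_def)
  qed
  then show "pick p r c \<in> Pset k n" "lep p (pick p r c)" "lep (pick p r c) r" by auto
qed

lemma pick_unique:
  assumes k: "0 < k" and q: "q \<in> Pset k n" and r: "r \<in> Pset k n" and pq: "lep p q" and qr: "lep q r"
  shows "q = pick p r (fst q)"
proof (cases "fst q = fst p \<or> fst q = fst r")
  case True
  show ?thesis
  proof (cases "fst q = fst p")
    case True
    then have "p = q" using lep_eq[OF pq] by simp
    then show ?thesis by (simp add: pick_def)
  next
    case False
    then have e: "fst q = fst r" using \<open>fst q = fst p \<or> fst q = fst r\<close> by simp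
    then have "q = r" using lep_eq[OF qr] by simp
    then show ?thesis using False e by (simp add: pick_def)
  qed
next
  case False
  then have cp: "fst q \<noteq> fst p" "fst q \<noteq> fst r" by auto
  have r1: "fst r \<le> one k" using r by (simp add: Pset_def)
  have c1: "fst p \<le> fst q" "fst q \<le> fst r" using lep_le[OF pq] lep_le[OF qr] by auto
  have cz: "fst q \<noteq> zr"
  proof
    assume "fst q = zr" then have "fst p \<le> zr" using c1 by simp
    then have "fst p = zr" by (auto simp: le_fun_def zr_def fun_eq_iff)
    then show False using cp \<open>fst q = zr\<close> by simp
  qed
  have co: "fst q \<noteq> one k"
  proof
    assume "fst q = one k" then have "fst r = one k" using c1 r1 by (simp add: order_antisym)
    then show False using cp \<open>fst q = one k\<close> by simp
  qed
  have x0: "fst (snd q) = 0" using q cz co unfolding Pset_def by simp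
  have "q \<noteq> zA" using cz by (auto simp: zA_def)
  then have "snd (snd q) = snd (snd r)" using qr cp unfolding lep_def by auto
  then show ?thesis using cp x0 by (simp add: pick_def prod_eq_iff)
qed

lemma finite_Pset: "finite (Pset k n)"
proof -
  have "finite {f::nat\<Rightarrow>nat. \<forall>x. (x \<in> {..<k} \<longrightarrow> f x \<in> {0,1}) \<and> (x \<notin> {..<k} \<longrightarrow> f x = 0)}"
    by (rule finite_set_of_finite_funs) auto
  moreover have "{h::nat\<Rightarrow>nat. h \<le> one k} \<subseteq> {f::nat\<Rightarrow>nat. \<forall>x. (x \<in> {..<k} \<longrightarrow> f x \<in> {0,1}) \<and> (x \<notin> {..<k} \<longrightarrow> f x = 0)}"
  proof (intro subsetI CollectI allI)
    fix h x assume "h \<in> {h::nat\<Rightarrow>nat. h \<le> one k}"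
    then have "h x \<le> one k x" by (simp add: le_fun_def)
    then show "(x \<in> {..<k} \<longrightarrow> h x \<in> {0,1}) \<and> (x \<notin> {..<k} \<longrightarrow> h x = 0)"
      by (cases "x < k") (auto simp: one_def)
  qed
  ultimately have "finite {h::nat\<Rightarrow>nat. h \<le> one k}" by (rule finite_subset[rotated])
  then have "finite ({h::nat\<Rightarrow>nat. h \<le> one k} \<times> {..1::nat} \<times> {..n})" by auto
  moreover have "Pset k n \<subseteq> {h::nat\<Rightarrow>nat. h \<le> one k} \<times> {..1::nat} \<times> {..n}"
  proof
    fix p assume p: "p \<in> Pset k n"
    then have "fst p \<le> one k" by (simp add: Pset_def)
    moreover have "fst (snd p) \<le> 1 \<and> snd (snd p) \<le> n"
      using p unfolding Pset_def by (simp split: if_splits; linarith)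
    ultimately show "p \<in> {h::nat\<Rightarrow>nat. h \<le> one k} \<times> {..1::nat} \<times> {..n}"
      by (cases p) auto
  qed
  ultimately show ?thesis by (rule finite_subset[rotated])
qed

lemma finite_Emor: "finite (Emor k n)"
proof -
  have "Emor k n \<subseteq> Pset k n \<times> Pset k n" by (auto simp: Emor_def)
  then show ?thesis using finite_Pset by (metis finite_SigmaI finite_subset)
qed


lemma Emor_iff: "\<mu> \<in> Emor k n \<longleftrightarrow> fst \<mu> \<in> Pset k n \<and> snd \<mu> \<in> Pset k n \<and> lep (fst \<mu>) (snd \<mu>)"
  by (simp add: Emor_def)

lemma L0_simps[simp]: "Mor (L0 k n) = Emor k n" "src (L0 k n) \<mu> = (snd \<mu>, snd \<mu>)"
  "rng (L0 k n) \<mu> = (fst \<mu>, fst \<mu>)" "comp (L0 k n) \<mu> \<nu> = (fst \<mu>, snd \<nu>)"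
  "deg (L0 k n) \<mu> = (\<lambda>j. fst (snd \<mu>) j - fst (fst \<mu>) j)"
  by (simp_all add: L0_def)

lemma small_L0: "small_category (L0 k n)"
  unfolding small_category_def L0_simps
proof (intro conjI ballI impI)
  show "countable (Emor k n)" using finite_Emor by (rule countable_finite)
next
  fix \<mu> \<nu> assume m: "\<mu> \<in> Emor k n" and v: "\<nu> \<in> Emor k n" and e: "(snd \<mu>, snd \<mu>) = (fst \<nu>, fst \<nu>)"
  then show "(fst \<mu>, snd \<nu>) \<in> Emor k n" by (auto simp: Emor_iff intro: lep_trans)
qed (auto simp: Emor_iff)

lemma kgraph_L0:
  assumes k: "0 < k"
  shows "is_kgraph k (L0 k n)"
  unfolding is_kgraph_def
proof (intro conjI)
  show "small_category (L0 k n)" by (rule small_L0)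
  show "\<forall>\<mu>\<in>Mor (L0 k n). in_Nk k (deg (L0 k n) \<mu>)"
  proof
    fix \<mu> assume "\<mu> \<in> Mor (L0 k n)"
    then have "fst (snd \<mu>) \<le> one k" by (intro Pset_le_one[of _ k n]) (simp add: Emor_iff)
    then show "in_Nk k (deg (L0 k n) \<mu>)" by (simp add: in_Nk_def le_one_beyond)
  qed
  show "\<forall>\<mu>\<in>Mor (L0 k n). deg (L0 k n) (src (L0 k n) \<mu>) = (\<lambda>i. 0) \<and> deg (L0 k n) (rng (L0 k n) \<mu>) = (\<lambda>i. 0)"
    by simp
  show "\<forall>\<mu>\<in>Mor (L0 k n). \<forall>\<nu>\<in>Mor (L0 k n). src (L0 k n) \<mu> = rng (L0 k n) \<nu> \<longrightarrow>
        deg (L0 k n) (comp (L0 k n) \<mu> \<nu>) = (\<lambda>i. deg (L0 k n) \<mu> i + deg (L0 k n) \<nu> i)"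
  proof (intro ballI impI)
    fix \<mu> \<nu> assume m: "\<mu> \<in> Mor (L0 k n)" and v: "\<nu> \<in> Mor (L0 k n)" and e: "src (L0 k n) \<mu> = rng (L0 k n) \<nu>"
    have a: "fst (fst \<mu>) \<le> fst (snd \<mu>)" "fst (fst \<nu>) \<le> fst (snd \<nu>)"
      using m v by (auto simp: Emor_iff intro: lep_le)
    have b: "snd \<mu> = fst \<nu>" using e by simp
    show "deg (L0 k n) (comp (L0 k n) \<mu> \<nu>) = (\<lambda>i. deg (L0 k n) \<mu> i + deg (L0 k n) \<nu> i)"
      using a b by (auto simp: le_fun_def fun_eq_iff)
  qed
  show "\<forall>l\<in>Mor (L0 k n). \<forall>m na. in_Nk k m \<longrightarrow> in_Nk k na \<longrightarrow> deg (L0 k n) l = (\<lambda>i. m i + na i) \<longrightarrow>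
        (\<exists>!p. fst p \<in> Mor (L0 k n) \<and> snd p \<in> Mor (L0 k n) \<and> src (L0 k n) (fst p) = rng (L0 k n) (snd p) \<and>
              deg (L0 k n) (fst p) = m \<and> deg (L0 k n) (snd p) = na \<and> l = comp (L0 k n) (fst p) (snd p))"
  proof (intro ballI allI impI)
    fix l m na
    assume l: "l \<in> Mor (L0 k n)" and d: "deg (L0 k n) l = (\<lambda>i. m i + na i)"
    define p where "p = fst l"
    define r where "r = snd l"
    have p: "p \<in> Pset k n" and r: "r \<in> Pset k n" and pr: "lep p r"
      using l by (auto simp: Emor_iff p_def r_def)
    have ple: "fst p \<le> fst r" using lep_le[OF pr] .
    have lpr: "l = (p, r)" by (simp add: p_def r_def)
    have dj: "fst r j = fst p j + m j + na j" for j
      using fun_cong[OF d, of j] ple by (simp add: p_def r_def le_fun_def) (metis add.assoc le_add_diff_inverse)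
    define c where "c = (\<lambda>j. fst p j + m j)"
    have c1: "fst p \<le> c" by (simp add: c_def le_fun_def)
    have c2: "c \<le> fst r" by (simp add: c_def le_fun_def dj)
    define q where "q = pick p r c"
    note pp = pick_props[OF k p r pr c1 c2, folded q_def]
    show "\<exists>!pa. fst pa \<in> Mor (L0 k n) \<and> snd pa \<in> Mor (L0 k n) \<and> src (L0 k n) (fst pa) = rng (L0 k n) (snd pa) \<and>
              deg (L0 k n) (fst pa) = m \<and> deg (L0 k n) (snd pa) = na \<and> l = comp (L0 k n) (fst pa) (snd pa)"
    proof (rule ex1I[of _ "((p, q), (q, r))"])
      show "fst ((p, q), (q, r)) \<in> Mor (L0 k n) \<and> snd ((p, q), (q, r)) \<in> Mor (L0 k n) \<and>
        src (L0 k n) (fst ((p, q), (q, r))) = rng (L0 k n) (snd ((p, q), (q, r))) \<and>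
        deg (L0 k n) (fst ((p, q), (q, r))) = m \<and> deg (L0 k n) (snd ((p, q), (q, r))) = na \<and>
        l = comp (L0 k n) (fst ((p, q), (q, r))) (snd ((p, q), (q, r)))"
        using pp p r lpr by (simp add: Emor_iff c_def fun_eq_iff dj)
    next
      fix pa
      assume h: "fst pa \<in> Mor (L0 k n) \<and> snd pa \<in> Mor (L0 k n) \<and> src (L0 k n) (fst pa) = rng (L0 k n) (snd pa) \<and>
              deg (L0 k n) (fst pa) = m \<and> deg (L0 k n) (snd pa) = na \<and> l = comp (L0 k n) (fst pa) (snd pa)"
      define a where "a = fst (fst pa)"
      define b where "b = snd (fst pa)"
      have e1: "b = fst (snd pa)" using h by (simp add: b_def)
      have e2: "a = p" "snd (snd pa) = r" using h by (auto simp: a_def p_def r_def)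
      have ab: "lep p b" "b \<in> Pset k n" using h e2 by (auto simp: Emor_iff a_def b_def)
      have br: "lep b r" using h e1 e2 by (auto simp: Emor_iff)
      have "fst b = c"
      proof
        fix j
        have dm: "deg (L0 k n) (fst pa) = m" using h by blast
        have "fst b j - fst a j = m j" using fun_cong[OF dm, of j] by (simp add: a_def b_def)
        then have "fst b j - fst p j = m j" using e2 by simp
        moreover have "fst p j \<le> fst b j" using lep_le[OF ab(1)] by (simp add: le_fun_def)
        ultimately show "fst b j = c j" by (simp add: c_def)
      qed
      then have "b = q" using pick_unique[OF k ab(2) r ab(1) br] by (simp add: q_def)
      then show "pa = ((p, q), (q, r))" using e1 e2 by (simp add: a_def b_def prod_eq_iff)
    qed
  qed
qed


definition transp :: "('b \<Rightarrow> nat) \<Rightarrow> 'b kgraph \<Rightarrow> nat kgraph" where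
  "transp f L = \<lparr>Mor = f ` Mor L,
     src = (\<lambda>\<mu>. f (src L (inv_into (Mor L) f \<mu>))),
     rng = (\<lambda>\<mu>. f (rng L (inv_into (Mor L) f \<mu>))),
     comp = (\<lambda>\<mu> \<nu>. f (comp L (inv_into (Mor L) f \<mu>) (inv_into (Mor L) f \<nu>))),
     deg = (\<lambda>\<mu>. deg L (inv_into (Mor L) f \<mu>))\<rparr>"

definition Pseg :: "'c kgraph \<Rightarrow> 'c \<Rightarrow> (nat \<Rightarrow> nat) \<Rightarrow> (nat \<Rightarrow> nat) \<Rightarrow> 'c \<Rightarrow> bool" where
  "Pseg K l m n \<beta> \<longleftrightarrow> \<beta> \<in> Mor K \<and> deg K \<beta> = (\<lambda>i. n i - m i) \<and>
      (\<exists>\<alpha>\<in>Mor K. \<exists>\<gamma>\<in>Mor K. deg K \<alpha> = m \<and> src K \<alpha> = rng K \<beta> \<and> src K \<beta> = rng K \<gamma> \<and>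
          l = comp K (comp K \<alpha> \<beta>) \<gamma>)"

lemma seg_Pseg: "seg K l m n = (THE \<beta>. Pseg K l m n \<beta>)"
  by (simp add: seg_def Pseg_def)

context
  fixes f :: "'b \<Rightarrow> nat" and L :: "'b kgraph"
  assumes inj: "inj_on f (Mor L)" and sc: "small_category L"
begin

lemma iv[simp]: "x \<in> Mor L \<Longrightarrow> inv_into (Mor L) f (f x) = x"
  using inj by (simp add: inv_into_f_f)

lemma feq[simp]: "x \<in> Mor L \<Longrightarrow> y \<in> Mor L \<Longrightarrow> f x = f y \<longleftrightarrow> x = y"
  using inj by (meson inj_on_eq_iff)

lemma T_simps[simp]:
  "Mor (transp f L) = f ` Mor L"
  "x \<in> Mor L \<Longrightarrow> src (transp f L) (f x) = f (src L x)"
  "x \<in> Mor L \<Longrightarrow> rng (transp f L) (f x) = f (rng L x)"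
  "x \<in> Mor L \<Longrightarrow> y \<in> Mor L \<Longrightarrow> comp (transp f L) (f x) (f y) = f (comp L x y)"
  "x \<in> Mor L \<Longrightarrow> deg (transp f L) (f x) = deg L x"
  by (simp_all add: transp_def)

lemma scL: "\<mu> \<in> Mor L \<Longrightarrow> src L \<mu> \<in> Mor L \<and> rng L \<mu> \<in> Mor L"
  "\<mu> \<in> Mor L \<Longrightarrow> src L (src L \<mu>) = src L \<mu> \<and> rng L (src L \<mu>) = src L \<mu> \<and>
                 src L (rng L \<mu>) = rng L \<mu> \<and> rng L (rng L \<mu>) = rng L \<mu>"
  "\<mu> \<in> Mor L \<Longrightarrow> comp L \<mu> (src L \<mu>) = \<mu> \<and> comp L (rng L \<mu>) \<mu> = \<mu>"
  "\<mu> \<in> Mor L \<Longrightarrow> \<nu> \<in> Mor L \<Longrightarrow> src L \<mu> = rng L \<nu> \<Longrightarrow>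
        comp L \<mu> \<nu> \<in> Mor L \<and> src L (comp L \<mu> \<nu>) = src L \<nu> \<and> rng L (comp L \<mu> \<nu>) = rng L \<mu>"
  "\<mu> \<in> Mor L \<Longrightarrow> \<nu> \<in> Mor L \<Longrightarrow> \<rho> \<in> Mor L \<Longrightarrow> src L \<mu> = rng L \<nu> \<Longrightarrow> src L \<nu> = rng L \<rho> \<Longrightarrow>
        comp L (comp L \<mu> \<nu>) \<rho> = comp L \<mu> (comp L \<nu> \<rho>)"
  using sc unfolding small_category_def by blast+

lemma small_transp: "small_category (transp f L)"
  unfolding small_category_def
proof (intro conjI)
  show "countable (Mor (transp f L))" using sc by (simp add: small_category_def)
  show "\<forall>\<mu>\<in>Mor (transp f L). src (transp f L) \<mu> \<in> Mor (transp f L) \<and> rng (transp f L) \<mu> \<in> Mor (transp f L)"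
    using scL(1) by auto
  show "\<forall>\<mu>\<in>Mor (transp f L). src (transp f L) (src (transp f L) \<mu>) = src (transp f L) \<mu> \<and>
        rng (transp f L) (src (transp f L) \<mu>) = src (transp f L) \<mu> \<and>
        src (transp f L) (rng (transp f L) \<mu>) = rng (transp f L) \<mu> \<and>
        rng (transp f L) (rng (transp f L) \<mu>) = rng (transp f L) \<mu>"
    using scL(1,2) by auto
  show "\<forall>\<mu>\<in>Mor (transp f L). comp (transp f L) \<mu> (src (transp f L) \<mu>) = \<mu> \<and>
        comp (transp f L) (rng (transp f L) \<mu>) \<mu> = \<mu>"
    using scL(1,3) by auto
  show "\<forall>\<mu>\<in>Mor (transp f L). \<forall>\<nu>\<in>Mor (transp f L). src (transp f L) \<mu> = rng (transp f L) \<nu> \<longrightarrow>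
        comp (transp f L) \<mu> \<nu> \<in> Mor (transp f L) \<and> src (transp f L) (comp (transp f L) \<mu> \<nu>) = src (transp f L) \<nu> \<and>
        rng (transp f L) (comp (transp f L) \<mu> \<nu>) = rng (transp f L) \<mu>"
    using scL(1,4) by auto
  show "\<forall>\<mu>\<in>Mor (transp f L). \<forall>\<nu>\<in>Mor (transp f L). \<forall>\<rho>\<in>Mor (transp f L).
        src (transp f L) \<mu> = rng (transp f L) \<nu> \<longrightarrow> src (transp f L) \<nu> = rng (transp f L) \<rho> \<longrightarrow>
        comp (transp f L) (comp (transp f L) \<mu> \<nu>) \<rho> = comp (transp f L) \<mu> (comp (transp f L) \<nu> \<rho>)"
    using scL(1,4,5) by auto
qed

lemma kgraph_transp:
  assumes kg: "is_kgraph k L"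
  shows "is_kgraph k (transp f L)"
proof -
  have A: "\<forall>\<mu>\<in>Mor L. in_Nk k (deg L \<mu>)"
    and B: "\<forall>\<mu>\<in>Mor L. deg L (src L \<mu>) = (\<lambda>i. 0) \<and> deg L (rng L \<mu>) = (\<lambda>i. 0)"
    and C: "\<forall>\<mu>\<in>Mor L. \<forall>\<nu>\<in>Mor L. src L \<mu> = rng L \<nu> \<longrightarrow> deg L (comp L \<mu> \<nu>) = (\<lambda>i. deg L \<mu> i + deg L \<nu> i)"
    and D: "\<forall>l\<in>Mor L. \<forall>m n. in_Nk k m \<longrightarrow> in_Nk k n \<longrightarrow> deg L l = (\<lambda>i. m i + n i) \<longrightarrow>
        (\<exists>!p. fst p \<in> Mor L \<and> snd p \<in> Mor L \<and> src L (fst p) = rng L (snd p) \<and>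
                    deg L (fst p) = m \<and> deg L (snd p) = n \<and> l = comp L (fst p) (snd p))"
    using kg unfolding is_kgraph_def by blast+
  show ?thesis
    unfolding is_kgraph_def
  proof (intro conjI)
    show "small_category (transp f L)" by (rule small_transp)
    show "\<forall>\<mu>\<in>Mor (transp f L). in_Nk k (deg (transp f L) \<mu>)" using A by auto
    show "\<forall>\<mu>\<in>Mor (transp f L). deg (transp f L) (src (transp f L) \<mu>) = (\<lambda>i. 0) \<and>
        deg (transp f L) (rng (transp f L) \<mu>) = (\<lambda>i. 0)"
    proof
      fix \<mu> assume "\<mu> \<in> Mor (transp f L)"
      then obtain x where x: "x \<in> Mor L" "\<mu> = f x" by auto
      have "src L x \<in> Mor L" "rng L x \<in> Mor L" using scL(1)[OF x(1)] by auto
      then show "deg (transp f L) (src (transp f L) \<mu>) = (\<lambda>i. 0) \<and>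
        deg (transp f L) (rng (transp f L) \<mu>) = (\<lambda>i. 0)" using B x by simp
    qed
    show "\<forall>\<mu>\<in>Mor (transp f L). \<forall>\<nu>\<in>Mor (transp f L). src (transp f L) \<mu> = rng (transp f L) \<nu> \<longrightarrow>
        deg (transp f L) (comp (transp f L) \<mu> \<nu>) = (\<lambda>i. deg (transp f L) \<mu> i + deg (transp f L) \<nu> i)"
    proof (intro ballI impI)
      fix \<mu> \<nu> assume "\<mu> \<in> Mor (transp f L)" "\<nu> \<in> Mor (transp f L)" and e: "src (transp f L) \<mu> = rng (transp f L) \<nu>"
      then obtain x y where xy: "x \<in> Mor L" "\<mu> = f x" "y \<in> Mor L" "\<nu> = f y" by auto
      have sx: "src L x \<in> Mor L" "rng L y \<in> Mor L" using scL(1) xy by auto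
      have "f (src L x) = f (rng L y)" using e xy by simp
      then have s: "src L x = rng L y" using sx feq by blast
      have c: "comp L x y \<in> Mor L" using scL(4)[OF xy(1) xy(3) s] by blast
      show "deg (transp f L) (comp (transp f L) \<mu> \<nu>) = (\<lambda>i. deg (transp f L) \<mu> i + deg (transp f L) \<nu> i)"
        using C xy s c by simp
    qed
    show "\<forall>l\<in>Mor (transp f L). \<forall>m n. in_Nk k m \<longrightarrow> in_Nk k n \<longrightarrow> deg (transp f L) l = (\<lambda>i. m i + n i) \<longrightarrow>
        (\<exists>!p. fst p \<in> Mor (transp f L) \<and> snd p \<in> Mor (transp f L) \<and> src (transp f L) (fst p) = rng (transp f L) (snd p) \<and>
              deg (transp f L) (fst p) = m \<and> deg (transp f L) (snd p) = n \<and> l = comp (transp f L) (fst p) (snd p))"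
    proof (intro ballI allI impI)
      fix l m n assume l: "l \<in> Mor (transp f L)" and m: "in_Nk k m" and n: "in_Nk k n"
        and d: "deg (transp f L) l = (\<lambda>i. m i + n i)"
      obtain l0 where l0: "l0 \<in> Mor L" "l = f l0" using l by auto
      have "deg L l0 = (\<lambda>i. m i + n i)" using d l0 by simp
      then obtain p0 where p0: "fst p0 \<in> Mor L \<and> snd p0 \<in> Mor L \<and> src L (fst p0) = rng L (snd p0) \<and>
                    deg L (fst p0) = m \<and> deg L (snd p0) = n \<and> l0 = comp L (fst p0) (snd p0)"
        and uq: "\<And>q. fst q \<in> Mor L \<and> snd q \<in> Mor L \<and> src L (fst q) = rng L (snd q) \<and>
                    deg L (fst q) = m \<and> deg L (snd q) = n \<and> l0 = comp L (fst q) (snd q) \<Longrightarrow> q = p0"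
        using D l0(1) m n by blast
      show "\<exists>!p. fst p \<in> Mor (transp f L) \<and> snd p \<in> Mor (transp f L) \<and> src (transp f L) (fst p) = rng (transp f L) (snd p) \<and>
              deg (transp f L) (fst p) = m \<and> deg (transp f L) (snd p) = n \<and> l = comp (transp f L) (fst p) (snd p)"
      proof (rule ex1I[of _ "(f (fst p0), f (snd p0))"])
        show "fst (f (fst p0), f (snd p0)) \<in> Mor (transp f L) \<and> snd (f (fst p0), f (snd p0)) \<in> Mor (transp f L) \<and>
          src (transp f L) (fst (f (fst p0), f (snd p0))) = rng (transp f L) (snd (f (fst p0), f (snd p0))) \<and>
          deg (transp f L) (fst (f (fst p0), f (snd p0))) = m \<and> deg (transp f L) (snd (f (fst p0), f (snd p0))) = n \<and>
          l = comp (transp f L) (fst (f (fst p0), f (snd p0))) (snd (f (fst p0), f (snd p0)))"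
          using p0 l0 by simp
      next
        fix q assume q: "fst q \<in> Mor (transp f L) \<and> snd q \<in> Mor (transp f L) \<and> src (transp f L) (fst q) = rng (transp f L) (snd q) \<and>
              deg (transp f L) (fst q) = m \<and> deg (transp f L) (snd q) = n \<and> l = comp (transp f L) (fst q) (snd q)"
        obtain a b where ab: "a \<in> Mor L" "b \<in> Mor L" "fst q = f a" "snd q = f b" using q by auto
        have sa: "src L a \<in> Mor L" "rng L b \<in> Mor L" using scL(1) ab by auto
        have "f (src L a) = f (rng L b)" using q ab by simp
        then have s: "src L a = rng L b" using sa feq by blast
        have c: "comp L a b \<in> Mor L" using scL(4)[OF ab(1) ab(2) s] by blast
        have "f l0 = f (comp L a b)" using q ab l0 by simp
        then have lc: "l0 = comp L a b" using c l0(1) feq by blast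
        have "(a, b) = p0"
          by (rule uq) (use q ab s lc in simp)
        then show "q = (f (fst p0), f (snd p0))" using ab by (auto simp: prod_eq_iff)
      qed
    qed
  qed
qed

lemma Pseg_transp:
  assumes l: "l \<in> Mor L" and b: "b \<in> Mor L"
  shows "Pseg (transp f L) (f l) m n (f b) \<longleftrightarrow> Pseg L l m n b"
proof
  assume "Pseg (transp f L) (f l) m n (f b)"
  then obtain a c where ac: "a \<in> Mor L" "c \<in> Mor L" "deg L a = m" "src L a = rng L b" "src L b = rng L c"
     "f l = comp (transp f L) (comp (transp f L) (f a) (f b)) (f c)" "deg L b = (\<lambda>i. n i - m i)"
    unfolding Pseg_def using b scL(1) by auto
  have "comp L a b \<in> Mor L" using scL(4)[OF ac(1) b ac(4)] by blast
  then have "l = comp L (comp L a b) c" using ac l b by (simp add: scL(4))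
  then show "Pseg L l m n b" unfolding Pseg_def using ac b by blast
next
  assume "Pseg L l m n b"
  then obtain a c where ac: "a \<in> Mor L" "c \<in> Mor L" "deg L a = m" "src L a = rng L b" "src L b = rng L c"
     "l = comp L (comp L a b) c" "deg L b = (\<lambda>i. n i - m i)"
    unfolding Pseg_def by auto
  have ab: "comp L a b \<in> Mor L" using scL(4)[OF ac(1) b ac(4)] by blast
  have "f l = comp (transp f L) (comp (transp f L) (f a) (f b)) (f c)"
    using ac ab b by simp
  then show "Pseg (transp f L) (f l) m n (f b)" unfolding Pseg_def using ac b
    by (intro conjI bexI[of _ "f a"] bexI[of _ "f c"]) auto
qed

lemma seg_transp:
  assumes l: "l \<in> Mor L" and u: "\<exists>!b. Pseg L l m n b"
  shows "seg (transp f L) (f l) m n = f (seg L l m n)"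
proof -
  obtain b where b: "Pseg L l m n b" and bu: "\<And>c. Pseg L l m n c \<Longrightarrow> c = b" using u by auto
  have bm: "b \<in> Mor L" using b by (simp add: Pseg_def)
  have s: "seg L l m n = b" unfolding seg_Pseg using b bu by (rule the_equality)
  have "seg (transp f L) (f l) m n = f b"
    unfolding seg_Pseg
  proof (rule the_equality)
    show "Pseg (transp f L) (f l) m n (f b)" using Pseg_transp[OF l bm] b by simp
  next
    fix c assume c: "Pseg (transp f L) (f l) m n c"
    then have "c \<in> f ` Mor L" by (simp add: Pseg_def)
    then obtain c0 where c0: "c0 \<in> Mor L" "c = f c0" by auto
    then have "Pseg L l m n c0" using Pseg_transp[OF l c0(1)] c by simp
    then show "c = f b" using bu c0 by simp
  qed
  then show ?thesis using s by simp
qed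

end


lemma pick_mono:
  assumes k: "0 < k" and p: "p \<in> Pset k n" and r: "r \<in> Pset k n" and pr: "lep p r"
    and c1: "fst p \<le> c" and cc: "c \<le> c'" and c2: "c' \<le> fst r"
  shows "lep (pick p r c) (pick p r c')"
proof (cases "c = c'")
  case True then show ?thesis by simp
next
  case False
  have u: "fst (pick p r c) = c" and v: "fst (pick p r c') = c'"
    using pick_props(4)[OF k p r pr] c1 cc c2 by (auto intro: order_trans)
  have ne: "c \<noteq> fst r"
  proof
    assume "c = fst r" then have "c' = c" using cc c2 by (simp add: order_antisym)
    then show False using False by simp
  qed
  have ne2: "c' \<noteq> fst p"
  proof
    assume "c' = fst p" then have "c' = c" using cc c1 by (simp add: order_antisym)
    then show False using False by simp
  qed
  have pr2: "p = r \<or> p = zA \<or> snd (snd p) = snd (snd r)" using pr by (auto simp: lep_def)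
  have cpv: "snd (snd (pick p r c')) = snd (snd r)" using ne2 by (auto simp: pick_def)
  have "pick p r c = zA \<or> snd (snd (pick p r c)) = snd (snd (pick p r c'))"
  proof (cases "c = fst p")
    case True
    then have "pick p r c = p" by (simp add: pick_def)
    moreover have "p \<noteq> r" using True ne by auto
    ultimately show ?thesis using pr2 cpv by auto
  next
    case False
    then have "snd (snd (pick p r c)) = snd (snd r)" using ne by (simp add: pick_def)
    then show ?thesis using cpv by simp
  qed
  then show ?thesis using u v cc False by (auto simp: lep_def)
qed

definition segv :: "elt \<times> elt \<Rightarrow> (nat \<Rightarrow> nat) \<Rightarrow> (nat \<Rightarrow> nat) \<Rightarrow> elt \<times> elt" where
  "segv l a b = (pick (fst l) (snd l) (\<lambda>j. fst (fst l) j + a j), pick (fst l) (snd l) (\<lambda>j. fst (fst l) j + b j))"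

lemma Pseg_L0:
  assumes k: "0 < k" and l: "l \<in> Emor k n" and ab: "a \<le> b" and br: "(\<lambda>j. fst (fst l) j + b j) \<le> fst (snd l)"
  shows "Pseg (L0 k n) l a b \<beta> \<longleftrightarrow> \<beta> = segv l a b"
proof -
  define p where "p = fst l"
  define r where "r = snd l"
  have p: "p \<in> Pset k n" and r: "r \<in> Pset k n" and pr: "lep p r" and lpr: "l = (p, r)"
    using l by (auto simp: Emor_iff p_def r_def)
  define ca where "ca = (\<lambda>j. fst p j + a j)"
  define cb where "cb = (\<lambda>j. fst p j + b j)"
  have ca1: "fst p \<le> ca" and cab: "ca \<le> cb" and cb2: "cb \<le> fst r"
    using ab br by (auto simp: ca_def cb_def le_fun_def p_def r_def)
  have ca2: "ca \<le> fst r" using cab cb2 by (rule order_trans)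
  have cb1: "fst p \<le> cb" using ca1 cab by (rule order_trans)
  note A = pick_props[OF k p r pr ca1 ca2] and B = pick_props[OF k p r pr cb1 cb2]
  have sv: "segv l a b = (pick p r ca, pick p r cb)" by (simp add: segv_def p_def r_def ca_def cb_def)
  show ?thesis
  proof
    assume P: "Pseg (L0 k n) l a b \<beta>"
    then obtain \<alpha> \<gamma> where h0: "\<beta> \<in> Emor k n" "(\<lambda>j. fst (snd \<beta>) j - fst (fst \<beta>) j) = (\<lambda>i. b i - a i)"
      "\<alpha> \<in> Emor k n" "\<gamma> \<in> Emor k n" "(\<lambda>j. fst (snd \<alpha>) j - fst (fst \<alpha>) j) = a"
      "(snd \<alpha>, snd \<alpha>) = (fst \<beta>, fst \<beta>)" "(snd \<beta>, snd \<beta>) = (fst \<gamma>, fst \<gamma>)" "l = (fst \<alpha>, snd \<gamma>)"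
      unfolding Pseg_def L0_simps fst_conv snd_conv by blast
    have h6: "snd \<alpha> = fst \<beta>" using h0(6) by simp
    have h7: "snd \<beta> = fst \<gamma>" using h0(7) by simp
    note h = h0(1-5) h6 h7 h0(8)
    define u where "u = fst \<beta>"
    define v where "v = snd \<beta>"
    have a1: "fst \<alpha> = p" "snd \<gamma> = r" using h(8) lpr by simp_all
    have pu: "lep p u" using h(3) h(6) a1 unfolding Emor_iff u_def by metis
    have uv: "lep u v" and u: "u \<in> Pset k n" and v: "v \<in> Pset k n" using h(1) unfolding Emor_iff u_def v_def by simp_all
    have vr: "lep v r" using h(4) h(7) a1 unfolding Emor_iff v_def by metis
    have fu: "fst u = ca"
    proof
      fix j
      have "fst u j - fst p j = a j" using fun_cong[OF h(5), of j] h(6) a1 by (simp add: u_def)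
      moreover have "fst p j \<le> fst u j" using lep_le[OF pu] by (simp add: le_fun_def)
      ultimately show "fst u j = ca j" by (simp add: ca_def)
    qed
    have fv: "fst v = cb"
    proof
      fix j
      have "fst v j - fst u j = b j - a j" using fun_cong[OF h(2), of j] by (simp add: u_def v_def)
      moreover have "fst u j \<le> fst v j" using lep_le[OF uv] by (simp add: le_fun_def)
      moreover have "a j \<le> b j" using ab by (simp add: le_fun_def)
      ultimately show "fst v j = cb j" using fu by (simp add: ca_def cb_def fun_eq_iff)
    qed
    have "u = pick p r ca" using pick_unique[OF k u r pu lep_trans[OF uv vr]] fu by simp
    moreover have "v = pick p r cb" using pick_unique[OF k v r lep_trans[OF pu uv] vr] fv by simp
    ultimately show "\<beta> = segv l a b" using sv by (simp add: u_def v_def prod_eq_iff)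
  next
    assume e: "\<beta> = segv l a b"
    have mono: "lep (pick p r ca) (pick p r cb)" by (rule pick_mono[OF k p r pr ca1 cab cb2])
    have d1: "(\<lambda>j. fst (pick p r cb) j - fst (pick p r ca) j) = (\<lambda>i. b i - a i)"
      using A(4) B(4) by (simp add: ca_def cb_def)
    have d2: "(\<lambda>j. fst (pick p r ca) j - fst p j) = a"
      using A(4) by (simp add: ca_def)
    have m1: "(pick p r ca, pick p r cb) \<in> Emor k n" using A B mono by (simp add: Emor_iff)
    have m2: "(p, pick p r ca) \<in> Emor k n" using A p by (simp add: Emor_iff)
    have m3: "(pick p r cb, r) \<in> Emor k n" using B r by (simp add: Emor_iff)
    show "Pseg (L0 k n) l a b \<beta>"
      unfolding Pseg_def e sv L0_simps
      apply (rule conjI[OF m1])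
      apply (rule conjI)
      using d1 apply simp
      apply (rule bexI[OF _ m2])
      apply (rule bexI[OF _ m3])
      using d1 d2 lpr by simp
  qed
qed

definition enc :: "nat \<Rightarrow> nat \<Rightarrow> elt \<times> elt \<Rightarrow> nat" where
  "enc k n = to_nat_on (Emor k n)"

definition LL :: "nat \<Rightarrow> nat \<Rightarrow> nat kgraph" where
  "LL k n = transp (enc k n) (L0 k n)"

lemma inj_enc: "inj_on (enc k n) (Emor k n)"
  unfolding enc_def by (rule inj_on_to_nat_on) (rule countable_finite[OF finite_Emor])

lemma kgraph_LL: "0 < k \<Longrightarrow> is_kgraph k (LL k n)"
  unfolding LL_def using kgraph_transp[of "enc k n" "L0 k n" k] inj_enc small_L0 kgraph_L0 by simp

lemma finite_LL: "finite_kgraph (LL k n)"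
  unfolding finite_kgraph_def LL_def using finite_Emor by (simp add: transp_def)

lemma seg_LL:
  assumes k: "0 < k" and l: "l \<in> Emor k n" and ab: "a \<le> b" and br: "(\<lambda>j. fst (fst l) j + b j) \<le> fst (snd l)"
  shows "seg (LL k n) (enc k n l) a b = enc k n (segv l a b)"
proof -
  have u: "\<exists>!\<beta>. Pseg (L0 k n) l a b \<beta>" using Pseg_L0[OF k l ab br] by simp
  have e: "Pseg (L0 k n) l a b = (\<lambda>\<beta>. \<beta> = segv l a b)" using Pseg_L0[OF k l ab br] by (simp add: fun_eq_iff)
  have "seg (L0 k n) l a b = segv l a b"
    unfolding seg_Pseg e by simp
  moreover have "seg (transp (enc k n) (L0 k n)) (enc k n l) a b = enc k n (seg (L0 k n) l a b)"
    by (rule seg_transp) (use inj_enc small_L0 l u in simp_all)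
  ultimately show ?thesis unfolding LL_def by simp
qed


definition Mx :: "nat \<Rightarrow> (nat \<Rightarrow> real) \<Rightarrow> real" where "Mx k T = Max (T ` {..<k})"
definition Mn :: "nat \<Rightarrow> (nat \<Rightarrow> real) \<Rightarrow> real" where "Mn k T = Min (T ` {..<k})"

definition Sv :: "nat \<Rightarrow> real \<Rightarrow> real \<Rightarrow> (nat \<Rightarrow> real) \<Rightarrow> (nat \<Rightarrow> real)" where
  "Sv k s1 s2 T = (\<lambda>j. if j = 0 then s1 * (1 - Mx k T) else if j = 1 then s2 * Mn k T
      else if j \<le> k then T (j - 2) - T (k - 1) else 0)"

definition inbox :: "nat \<Rightarrow> (nat \<Rightarrow> real) \<Rightarrow> bool" where
  "inbox k T \<longleftrightarrow> (\<forall>j<k. 0 \<le> T j \<and> T j \<le> 1) \<and> (\<forall>j\<ge>k. T j = 0)"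

lemma Mx_ge: "j < k \<Longrightarrow> T j \<le> Mx k T"
  unfolding Mx_def by (rule Max_ge) auto
lemma Mn_le: "j < k \<Longrightarrow> Mn k T \<le> T j"
  unfolding Mn_def by (rule Min_le) auto
lemma Mx_in: "0 < k \<Longrightarrow> \<exists>j<k. Mx k T = T j"
proof -
  assume "0 < k"
  then have "Max (T ` {..<k}) \<in> T ` {..<k}" by (intro Max_in) auto
  then show ?thesis by (auto simp: Mx_def)
qed
lemma Mn_in: "0 < k \<Longrightarrow> \<exists>j<k. Mn k T = T j"
proof -
  assume "0 < k"
  then have "Min (T ` {..<k}) \<in> T ` {..<k}" by (intro Min_in) auto
  then show ?thesis by (auto simp: Mn_def)
qed

lemma Mx_box: "0 < k \<Longrightarrow> inbox k T \<Longrightarrow> 0 \<le> Mx k T \<and> Mx k T \<le> 1"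
  using Mx_in[of k T] by (auto simp: inbox_def)
lemma Mn_box: "0 < k \<Longrightarrow> inbox k T \<Longrightarrow> 0 \<le> Mn k T \<and> Mn k T \<le> 1"
  using Mn_in[of k T] by (auto simp: inbox_def)

lemma Mx_shift: "0 < k \<Longrightarrow> Mx k (\<lambda>j. T j + c) = Mx k T + c"
proof -
  assume k: "0 < k"
  have "(\<lambda>y. y + c) (Max (T ` {..<k})) = Max ((\<lambda>y. y + c) ` (T ` {..<k}))"
    by (rule mono_Max_commute) (use k in \<open>auto simp: mono_def\<close>)
  then show ?thesis by (simp add: Mx_def image_image)
qed
lemma Mn_shift: "0 < k \<Longrightarrow> Mn k (\<lambda>j. T j + c) = Mn k T + c"
proof -
  assume k: "0 < k"
  have "(\<lambda>y. y + c) (Min (T ` {..<k})) = Min ((\<lambda>y. y + c) ` (T ` {..<k}))"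
    by (rule mono_Min_commute) (use k in \<open>auto simp: mono_def\<close>)
  then show ?thesis by (simp add: Mn_def image_image)
qed

lemma Mx_cong: "(\<And>j. j < k \<Longrightarrow> T j = T' j) \<Longrightarrow> Mx k T = Mx k T'"
  unfolding Mx_def by (metis image_cong lessThan_iff)
lemma Mn_cong: "(\<And>j. j < k \<Longrightarrow> T j = T' j) \<Longrightarrow> Mn k T = Mn k T'"
  unfolding Mn_def by (metis image_cong lessThan_iff)

lemma Sv_set:
  assumes k: "0 < k"
  shows "insert 0 (Sv k s1 s2 T ` {2..k}) = (\<lambda>j. T j - T (k - 1)) ` {..<k}"
proof -
  have a: "Sv k s1 s2 T ` {2..k} = (\<lambda>j. T j - T (k - 1)) ` {..<k-1}"
  proof
    show "Sv k s1 s2 T ` {2..k} \<subseteq> (\<lambda>j. T j - T (k - 1)) ` {..<k - 1}"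
    proof
      fix y assume "y \<in> Sv k s1 s2 T ` {2..k}"
      then obtain j where j: "j \<in> {2..k}" "y = Sv k s1 s2 T j" by auto
      then have "y = T (j - 2) - T (k - 1)" "j - 2 < k - 1" by (auto simp: Sv_def)
      then show "y \<in> (\<lambda>j. T j - T (k - 1)) ` {..<k - 1}" by auto
    qed
    show "(\<lambda>j. T j - T (k - 1)) ` {..<k - 1} \<subseteq> Sv k s1 s2 T ` {2..k}"
    proof
      fix y assume "y \<in> (\<lambda>j. T j - T (k - 1)) ` {..<k - 1}"
      then obtain j where j: "j < k - 1" "y = T j - T (k - 1)" by auto
      then have "Sv k s1 s2 T (j + 2) = y" "j + 2 \<in> {2..k}" by (auto simp: Sv_def)
      then show "y \<in> Sv k s1 s2 T ` {2..k}" by (metis image_eqI)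
    qed
  qed
  have b: "{..<k} = insert (k - 1) {..<k-1}" using k by auto
  show ?thesis unfolding a b by simp
qed

lemma nu_Sv:
  assumes k: "0 < k"
  shows "nu k (Sv k s1 s2 T) = Mx k T - Mn k T"
proof -
  have e: "insert 0 (Sv k s1 s2 T ` {2..k}) = (\<lambda>y. y - T (k - 1)) ` (T ` {..<k})"
    unfolding Sv_set[OF k] by (simp add: image_image)
  have "Max ((\<lambda>y. y - T (k - 1)) ` (T ` {..<k})) = Max (T ` {..<k}) - T (k - 1)"
    by (rule mono_Max_commute[symmetric]) (use k in \<open>auto simp: mono_def\<close>)
  moreover have "Min ((\<lambda>y. y - T (k - 1)) ` (T ` {..<k})) = Min (T ` {..<k}) - T (k - 1)"
    by (rule mono_Min_commute[symmetric]) (use k in \<open>auto simp: mono_def\<close>)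
  ultimately show ?thesis unfolding nu_def e Mx_def Mn_def by simp
qed

lemma rho_Sv:
  assumes k: "0 < k" and T: "inbox k T" and s: "\<bar>s1\<bar> = 1" "\<bar>s2\<bar> = 1"
  shows "rho k (Sv k s1 s2 T) = 1"
proof -
  have a: "\<bar>Sv k s1 s2 T 0\<bar> = 1 - Mx k T" using Mx_box[OF k T] s by (simp add: Sv_def abs_mult)
  have b: "\<bar>Sv k s1 s2 T 1\<bar> = Mn k T" using Mn_box[OF k T] s by (simp add: Sv_def abs_mult)
  show ?thesis unfolding rho_def a b nu_Sv[OF k] by simp
qed

lemma Sv_beyond: "0 < k \<Longrightarrow> j > k \<Longrightarrow> Sv k s1 s2 T j = 0"
  by (simp add: Sv_def)

lemma Sv_inj:
  assumes k: "0 < k" and T: "inbox k T" and T': "inbox k T'" and s: "\<bar>s2\<bar> = 1" "\<bar>s2'\<bar> = 1"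
    and e: "Sv k s1 s2 T = Sv k s1' s2' T'"
  shows "T = T'"
proof -
  have "s2 * Mn k T = s2' * Mn k T'" using fun_cong[OF e, of 1] by (simp add: Sv_def)
  then have "\<bar>s2\<bar> * \<bar>Mn k T\<bar> = \<bar>s2'\<bar> * \<bar>Mn k T'\<bar>" by (metis abs_mult)
  then have mn: "Mn k T = Mn k T'" using s Mn_box[OF k T] Mn_box[OF k T'] by simp
  define c where "c = T' (k - 1) - T (k - 1)"
  have sh: "T' j = T j + c" if "j < k" for j
  proof (cases "j = k - 1")
    case True then show ?thesis by (simp add: c_def)
  next
    case False
    then have "j < k - 1" using that by auto
    then have "Sv k s1 s2 T (j + 2) = T j - T (k - 1)" "Sv k s1' s2' T' (j + 2) = T' j - T' (k - 1)"
      by (auto simp: Sv_def)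
    then show ?thesis using e by (simp add: c_def)
  qed
  have "Mn k T' = Mn k T + c" using Mn_cong[of k T' "\<lambda>j. T j + c"] sh Mn_shift[OF k] by simp
  then have "c = 0" using mn by simp
  then show "T = T'" using sh T T' by (auto simp: inbox_def fun_eq_iff) (metis not_le)
qed

lemma Sv0_one:
  assumes k: "0 < k" and T: "inbox k T" and s: "\<bar>s1\<bar> = 1" and e: "Sv k s1 s2 T 0 = 1"
  shows "s1 = 1 \<and> (\<forall>j. T j = 0)"
proof -
  have m: "s1 * (1 - Mx k T) = 1" using e by (simp add: Sv_def)
  have b: "0 \<le> Mx k T" "Mx k T \<le> 1" using Mx_box[OF k T] by auto
  have "s1 = 1 \<or> s1 = -1" using s by auto
  then have s1: "s1 = 1" "Mx k T = 0" using m b by auto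
  have "T j = 0" for j
  proof (cases "j < k")
    case True then show ?thesis using Mx_ge[OF True, of T] s1 T by (auto simp: inbox_def)
  next
    case False then show ?thesis using T by (auto simp: inbox_def)
  qed
  then show ?thesis using s1 by simp
qed

lemma Ext_same: "z 0 = 1 \<Longrightarrow> Ext k i z = Ext k i' z"
  by (simp add: Ext_def)

lemma nu_scale:
  assumes c: "0 < c"
  shows "nu k (\<lambda>j. y j / c) = nu k y / c"
proof -
  have e: "insert 0 ((\<lambda>j. y j / c) ` {2..k}) = (\<lambda>z. z / c) ` insert 0 (y ` {2..k})"
    by (simp add: image_image)
  have m: "mono (\<lambda>z::real. z / c)" using c by (auto simp: mono_def divide_right_mono)
  have "Max ((\<lambda>z. z / c) ` insert 0 (y ` {2..k})) = Max (insert 0 (y ` {2..k})) / c"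
    by (rule mono_Max_commute[OF m, symmetric]) auto
  moreover have "Min ((\<lambda>z. z / c) ` insert 0 (y ` {2..k})) = Min (insert 0 (y ` {2..k})) / c"
    by (rule mono_Min_commute[OF m, symmetric]) auto
  ultimately show ?thesis unfolding nu_def e by (simp add: diff_divide_distrib)
qed

lemma rho_scale:
  assumes c: "0 < c"
  shows "rho k (\<lambda>j. y j / c) = rho k y / c"
  using c by (simp add: rho_def nu_scale add_divide_distrib)


definition sg :: "elt \<Rightarrow> real" where "sg e = (if fst (snd e) = 1 then -1 else 1)"

definition Gk :: "nat \<Rightarrow> elt \<times> elt \<Rightarrow> (nat \<Rightarrow> real) \<Rightarrow> (nat \<Rightarrow> real)" where
  "Gk k uv fr = Ext k (snd (snd (snd uv))) (Sv k (sg (fst uv)) (sg (snd uv)) (\<lambda>j. real (fst (fst uv) j) + fr j))"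

definition validkey :: "nat \<Rightarrow> nat \<Rightarrow> elt \<times> elt \<Rightarrow> (nat \<Rightarrow> real) \<Rightarrow> bool" where
  "validkey k n uv fr \<longleftrightarrow> uv \<in> Emor k n \<and> (\<forall>j. 0 \<le> fr j \<and> fr j < 1) \<and> (\<forall>j\<ge>k. fr j = 0) \<and>
     (\<forall>j. fst (snd uv) j = fst (fst uv) j + (if fr j > 0 then 1 else 0))"

lemma abs_sg: "\<bar>sg e\<bar> = 1" by (simp add: sg_def)

lemma sg_eq: "e \<in> Pset k n \<Longrightarrow> e' \<in> Pset k n \<Longrightarrow> sg e = sg e' \<Longrightarrow> fst (snd e) = fst (snd e')"
  unfolding sg_def Pset_def by (auto split: if_splits)

lemma Pset_x01: "e \<in> Pset k n \<Longrightarrow> fst (snd e) \<le> 1"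
  unfolding Pset_def by (auto split: if_splits)

lemma Pset_zr: "e \<in> Pset k n \<Longrightarrow> fst e = zr \<Longrightarrow> fst (snd e) = 0 \<Longrightarrow> e = zA"
  unfolding Pset_def zA_def by (auto simp: prod_eq_iff)

lemma Pset_mid: "e \<in> Pset k n \<Longrightarrow> fst e \<noteq> zr \<Longrightarrow> fst e \<noteq> one k \<Longrightarrow> fst (snd e) = 0"
  unfolding Pset_def by auto

lemma lep_cp: "lep u v \<Longrightarrow> u \<noteq> zA \<Longrightarrow> snd (snd u) = snd (snd v)"
  unfolding lep_def by auto

lemma elt_eq: "fst e = fst e' \<Longrightarrow> fst (snd e) = fst (snd e') \<Longrightarrow> snd (snd e) = snd (snd e') \<Longrightarrow> e = e'"
  by (simp add: prod_eq_iff)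

lemma fst_le_one_ex: "h \<le> one k \<Longrightarrow> h \<noteq> one k \<Longrightarrow> \<exists>j<k. h j = 0"
proof (rule ccontr)
  assume a: "h \<le> one k" "h \<noteq> one k" "\<not> (\<exists>j<k. h j = 0)"
  have "h j = one k j" for j
  proof (cases "j < k")
    case True then have "h j \<le> 1" "h j \<noteq> 0" using a by (auto simp: le_fun_def one_def dest: spec[of _ j])
    then show ?thesis using True by (simp add: one_def)
  next
    case False then show ?thesis using a(1) le_one_beyond[of h k j] by (simp add: one_def)
  qed
  then show False using a(2) by auto
qed

lemma fst_ne_zr_ex: "h \<noteq> zr \<Longrightarrow> h \<le> one k \<Longrightarrow> \<exists>j<k. h j \<noteq> 0"
proof (rule ccontr)
  assume a: "h \<noteq> zr" "h \<le> one k" "\<not> (\<exists>j<k. h j \<noteq> 0)"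
  have "h j = 0" for j using a le_one_beyond[of h k j] by (cases "j < k") auto
  then show False using a(1) by (auto simp: zr_def fun_eq_iff)
qed

definition TT :: "elt \<Rightarrow> (nat \<Rightarrow> real) \<Rightarrow> nat \<Rightarrow> real" where
  "TT u f = (\<lambda>j. real (fst u j) + f j)"

context
  fixes k n :: nat and u v :: elt and f :: "nat \<Rightarrow> real"
  assumes k: "0 < k" and vk: "validkey k n (u, v) f"
begin

lemma vk_u: "u \<in> Pset k n" and vk_v: "v \<in> Pset k n" and vk_uv: "lep u v"
  using vk by (auto simp: validkey_def Emor_iff)

lemma vk_f: "0 \<le> f j" "f j < 1" "j \<ge> k \<Longrightarrow> f j = 0"
  using vk by (auto simp: validkey_def)

lemma vk_fv: "fst v j = fst u j + (if f j > 0 then 1 else 0)"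
  using vk by (auto simp: validkey_def)

lemma vk_u1: "fst u j \<le> 1" "fst v j \<le> 1"
proof -
  have "fst u \<le> one k" "fst v \<le> one k" using vk_u vk_v Pset_le_one by auto
  then show "fst u j \<le> 1" "fst v j \<le> 1" by (auto simp: le_fun_def one_def dest!: spec[of _ j] split: if_splits)
qed


lemma TT_box: "inbox k (TT u f)"
  unfolding inbox_def TT_def
proof (intro conjI allI impI)
  fix j
  show "0 \<le> real (fst u j) + f j" using vk_f(1)[of j] by simp
  show "real (fst u j) + f j \<le> 1"
  proof (cases "f j > 0")
    case True then have "fst u j = 0" using vk_fv[of j] vk_u1(2)[of j] by simp
    then show ?thesis using vk_f(2)[of j] by simp
  next
    case False then show ?thesis using vk_u1(1)[of j] vk_f(1)[of j] by simp
  qed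
  assume "k \<le> j"
  then show "real (fst u j) + f j = 0" using vk_f(3)[of j] le_one_beyond[OF Pset_le_one[OF vk_u]] by simp
qed

lemma TT_floor: "fst u j = nat \<lfloor>(TT u f) j\<rfloor>" "f j = (TT u f) j - of_int \<lfloor>(TT u f) j\<rfloor>"
proof -
  have "\<lfloor>(TT u f) j\<rfloor> = int (fst u j)" unfolding TT_def using vk_f(1,2)[of j] by (simp add: floor_eq_iff)
  then show "fst u j = nat \<lfloor>(TT u f) j\<rfloor>" "f j = (TT u f) j - of_int \<lfloor>(TT u f) j\<rfloor>" by (simp_all add: TT_def)
qed

lemma Mx_lt: "fst u = zr \<Longrightarrow> Mx k (TT u f) < 1"
  using Mx_in[OF k, of "TT u f"] vk_f(2) by (auto simp: TT_def zr_def)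

lemma Mn_gt: "fst v = one k \<Longrightarrow> 0 < Mn k (TT u f)"
proof -
  assume a: "fst v = one k"
  obtain j where j: "j < k" "Mn k (TT u f) = (TT u f) j" using Mn_in[OF k] by blast
  have "fst v j = 1" using a j by (simp add: one_def)
  then have "fst u j = 1 \<or> f j > 0" using vk_fv[of j] by (auto split: if_splits)
  then show ?thesis using j vk_f(1)[of j] by (auto simp: TT_def)
qed

lemma Mx_one: "fst u = one k \<Longrightarrow> Mx k (TT u f) = 1"
proof -
  assume a: "fst u = one k"
  have "(TT u f) 0 \<le> Mx k (TT u f)" using Mx_ge[OF k] .
  moreover have "(TT u f) 0 \<ge> 1" using a k vk_f(1)[of 0] by (simp add: TT_def one_def)
  ultimately show ?thesis using Mx_box[OF k TT_box] by simp
qed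

lemma Mn_zero: "fst v \<noteq> one k \<Longrightarrow> Mn k (TT u f) = 0"
proof -
  assume a: "fst v \<noteq> one k"
  obtain j where j: "j < k" "fst v j = 0" using fst_le_one_ex[OF Pset_le_one[OF vk_v] a] by blast
  then have "fst u j = 0" "\<not> f j > 0" using vk_fv[of j] by (auto split: if_splits)
  then have "(TT u f) j = 0" using vk_f(1)[of j] by (simp add: TT_def)
  then show ?thesis using Mn_le[OF j(1), of "TT u f"] Mn_box[OF k TT_box] by simp
qed

lemma v_eq_u_one: "fst u = one k \<Longrightarrow> v = u"
proof -
  assume a: "fst u = one k"
  have "fst v = fst u"
  proof
    fix j show "fst v j = fst u j"
    proof (cases "j < k")
      case True
      then show ?thesis using lep_le[OF vk_uv] vk_u1(2)[of j] a
        by (auto simp: le_fun_def one_def dest!: spec[of _ j])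
    next
      case False
      then show ?thesis using le_one_beyond[OF Pset_le_one[OF vk_v], of j] le_one_beyond[OF Pset_le_one[OF vk_u], of j] by simp
    qed
  qed
  then show "v = u" using lep_eq[OF vk_uv] by simp
qed

lemma u_eq_v_zr: "fst v = zr \<Longrightarrow> u = v"
proof -
  assume a: "fst v = zr"
  have "fst u \<le> zr" using lep_le[OF vk_uv] a by simp
  then have "fst u = fst v" using a by (auto simp: le_fun_def zr_def fun_eq_iff)
  then show "u = v" using lep_eq[OF vk_uv] by simp
qed

lemma cp_uv: "u \<noteq> zA \<Longrightarrow> snd (snd u) = snd (snd v)"
  using lep_cp[OF vk_uv] by simp

end

lemma Gk_inj:
  assumes k: "0 < k" and v1: "validkey k n (u, v) f" and v2: "validkey k n (u', v') f'"
    and e: "Gk k (u, v) f = Gk k (u', v') f'"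
  shows "u = u' \<and> v = v' \<and> f = f'"
proof -
  note T1 = TT_box[OF k v1] and T2 = TT_box[OF k v2]
  define S where "S = Sv k (sg u) (sg v) (TT u f)"
  define S' where "S' = Sv k (sg u') (sg v') (TT u' f')"
  have GS: "Gk k (u, v) f = Ext k (snd (snd v)) S" "Gk k (u', v') f' = Ext k (snd (snd v')) S'"
    by (simp_all add: Gk_def S_def S'_def TT_def)
  have SS: "S = S'"
  proof
    fix j show "S j = S' j"
    proof (cases "j = Suc k")
      case True then show ?thesis by (simp add: S_def S'_def Sv_beyond[OF k])
    next
      case False then show ?thesis using fun_cong[OF e, of j] GS by (simp add: Ext_def)
    qed
  qed
  have cpor: "snd (snd v) = snd (snd v') \<or> S 0 = 1"
    using fun_cong[OF e, of "Suc k"] GS SS by (auto simp: Ext_def)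
  have TTe: "TT u f = TT u' f'"
    by (rule Sv_inj[OF k T1 T2 abs_sg abs_sg]) (use SS in \<open>simp add: S_def S'_def\<close>)
  have fu: "fst u = fst u'" using TT_floor(1)[OF k v1] TT_floor(1)[OF k v2] TTe by (simp add: fun_eq_iff)
  have ff: "f = f'" using TT_floor(2)[OF k v1] TT_floor(2)[OF k v2] TTe by (simp add: fun_eq_iff)
  have fv: "fst v = fst v'" using vk_fv[OF k v1] vk_fv[OF k v2] fu ff by (simp add: fun_eq_iff)
  note pu = vk_u[OF k v1] and pu' = vk_u[OF k v2] and pv = vk_v[OF k v1] and pv' = vk_v[OF k v2]
  show ?thesis
  proof (cases "S 0 = 1")
    case True
    have a: "sg u = 1" "\<forall>j. TT u f j = 0" using Sv0_one[OF k T1 abs_sg] True by (auto simp: S_def)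
    have a': "sg u' = 1" "\<forall>j. TT u' f' j = 0" using Sv0_one[OF k T2 abs_sg] True SS by (auto simp: S'_def)
    have zu: "fst u = zr" using a(2) TT_floor(1)[OF k v1] by (auto simp: zr_def fun_eq_iff)
    have zf: "f = (\<lambda>_. 0)" using a(2) TT_floor(2)[OF k v1] by (auto simp: fun_eq_iff)
    have uA: "u = zA" using Pset_zr[OF pu zu] a(1) Pset_x01[OF pu] by (auto simp: sg_def split: if_splits)
    have u'A: "u' = zA" using Pset_zr[OF pu' zu[unfolded fu]] a'(1) Pset_x01[OF pu'] by (auto simp: sg_def split: if_splits)
    have "fst v = zr" using vk_fv[OF k v1] zu zf by (simp add: zr_def fun_eq_iff)
    then have "v = u" using u_eq_v_zr[OF k v1] by simp
    moreover have "v' = u'" using u_eq_v_zr[OF k v2] \<open>fst v = zr\<close> fv by simp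
    ultimately show ?thesis using uA u'A ff by simp
  next
    case False
    then have cpv: "snd (snd v) = snd (snd v')" using cpor by simp
    have uu: "u = u'"
    proof (cases "fst u = zr")
      case z: True
      have "Mx k (TT u f) < 1" by (rule Mx_lt[OF k v1 z])
      moreover have "sg u * (1 - Mx k (TT u f)) = sg u' * (1 - Mx k (TT u f))"
        using fun_cong[OF SS, of 0] TTe by (simp add: S_def S'_def Sv_def)
      ultimately have "sg u = sg u'" by simp
      then have x: "fst (snd u) = fst (snd u')" by (rule sg_eq[OF pu pu'])
      show ?thesis
      proof (cases "u = zA")
        case True
        then have "fst (snd u) = 0" by (simp add: zA_def)
        then have "u' = zA" using Pset_zr[OF pu'] z fu x by simp
        then show ?thesis using True by simp
      next
        case False
        have "u' \<noteq> zA"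
        proof
          assume "u' = zA"
          then have "fst (snd u) = 0" using x by (simp add: zA_def)
          then have "u = zA" using Pset_zr[OF pu z] by simp
          then show False using False by simp
        qed
        then have "snd (snd u) = snd (snd u')" using cp_uv[OF k v1 False] cp_uv[OF k v2] cpv by simp
        then show ?thesis using fu x by (intro elt_eq) auto
      qed
    next
      case nz: False
      show ?thesis
      proof (cases "fst u = one k")
        case True
        have vu: "v = u" "v' = u'" using v_eq_u_one[OF k v1 True] v_eq_u_one[OF k v2] True fu by auto
        have "fst v = one k" using vu True by simp
        then have "Mn k (TT u f) > 0" by (rule Mn_gt[OF k v1])
        moreover have "sg v * Mn k (TT u f) = sg v' * Mn k (TT u f)"
          using fun_cong[OF SS, of 1] TTe by (simp add: S_def S'_def Sv_def)
        ultimately have "sg v = sg v'" by simp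
        then have "fst (snd v) = fst (snd v')" by (rule sg_eq[OF pv pv'])
        then show ?thesis using vu fu cpv by (intro elt_eq) auto
      next
        case False
        have x: "fst (snd u) = 0" "fst (snd u') = 0" using Pset_mid[OF pu nz False] Pset_mid[OF pu'] nz False fu by auto
        have "u \<noteq> zA" "u' \<noteq> zA" using nz fu by (auto simp: zA_def)
        then have "snd (snd u) = snd (snd u')" using cp_uv[OF k v1] cp_uv[OF k v2] cpv by simp
        then show ?thesis using fu x by (intro elt_eq) auto
      qed
    qed
    have vv: "v = v'"
    proof (cases "fst v = zr")
      case True
      have a: "u = v" by (rule u_eq_v_zr[OF k v1 True])
      have "fst v' = zr" using fv True by simp
      then have b: "u' = v'" by (rule u_eq_v_zr[OF k v2])
      show ?thesis using a b uu by simp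
    next
      case nz: False
      show ?thesis
      proof (cases "fst v = one k")
        case True
        have "Mn k (TT u f) > 0" by (rule Mn_gt[OF k v1 True])
        moreover have "sg v * Mn k (TT u f) = sg v' * Mn k (TT u f)"
          using fun_cong[OF SS, of 1] TTe by (simp add: S_def S'_def Sv_def)
        ultimately have "sg v = sg v'" by simp
        then have "fst (snd v) = fst (snd v')" by (rule sg_eq[OF pv pv'])
        then show ?thesis using fv cpv by (intro elt_eq) auto
      next
        case False
        have "fst (snd v) = 0" "fst (snd v') = 0" using Pset_mid[OF pv nz False] Pset_mid[OF pv'] nz False fv by auto
        then show ?thesis using fv cpv by (intro elt_eq) auto
      qed
    qed
    show ?thesis using uu vv ff by simp
  qed
qed


definition fracp :: "(nat \<Rightarrow> real) \<Rightarrow> nat \<Rightarrow> real" where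
  "fracp t = (\<lambda>i. t i - of_int \<lfloor>t i\<rfloor>)"

lemma topspace_cube: "topspace (cube k d) = {t. (\<forall>i\<ge>k. t i = 0) \<and> (\<forall>i<k. 0 \<le> t i \<and> t i \<le> real (d i))}"
  by (auto simp: cube_def topspace_Euclidean_space)

lemma cel_flr: "0 \<le> x \<Longrightarrow> nat \<lceil>x\<rceil> = nat \<lfloor>x\<rfloor> + (if x - of_int \<lfloor>x\<rfloor> > 0 then 1 else 0)"
proof -
  assume x: "0 \<le> x"
  show ?thesis
  proof (cases "x = of_int \<lfloor>x\<rfloor>")
    case True
    then have "\<lceil>x\<rceil> = \<lfloor>x\<rfloor>" by (metis ceiling_of_int)
    then show ?thesis using True by simp
  next
    case False
    then have "\<lceil>x\<rceil> = \<lfloor>x\<rfloor> + 1" by (simp add: ceiling_altdef)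
    moreover have "x - of_int \<lfloor>x\<rfloor> > 0" using False of_int_floor_le[of x] by linarith
    ultimately show ?thesis using x by (simp add: nat_add_distrib)
  qed
qed

context
  fixes k n :: nat and l :: "elt \<times> elt" and t :: "nat \<Rightarrow> real"
  assumes k: "0 < k" and l: "l \<in> Emor k n"
    and t: "t \<in> topspace (cube k (\<lambda>j. fst (snd l) j - fst (fst l) j))"
begin

lemma t_ge: "0 \<le> t j" using t by (cases "j < k") (auto simp: topspace_cube)
lemma t_beyond: "k \<le> j \<Longrightarrow> t j = 0" using t by (auto simp: topspace_cube)
lemma t_le: "t j \<le> real (fst (snd l) j - fst (fst l) j)"
  using t by (cases "j < k") (auto simp: topspace_cube)

lemma pr_le: "fst (fst l) \<le> fst (snd l)"
  using l by (auto simp: Emor_iff intro: lep_le)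

lemma flr_le_cel: "flr t \<le> cel t"
  unfolding flr_def cel_def le_fun_def using t_ge
  by (auto intro!: nat_mono ceiling_mono le_of_int_ceiling floor_le_ceiling)

lemma cel_bound: "(\<lambda>j. fst (fst l) j + cel t j) \<le> fst (snd l)"
  unfolding le_fun_def cel_def
proof
  fix j
  have "t j \<le> real (fst (snd l) j - fst (fst l) j)" by (rule t_le)
  then have "\<lceil>t j\<rceil> \<le> int (fst (snd l) j - fst (fst l) j)" by (simp add: ceiling_le_iff)
  moreover have "fst (fst l) j \<le> fst (snd l) j" using pr_le by (simp add: le_fun_def)
  ultimately show "fst (fst l) j + nat \<lceil>t j\<rceil> \<le> fst (snd l) j" by linarith
qed

lemma flr_bound: "(\<lambda>j. fst (fst l) j + flr t j) \<le> fst (snd l)"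
proof -
  have "fst (fst l) j + flr t j \<le> fst (snd l) j" for j
  proof -
    have "fst (fst l) j + cel t j \<le> fst (snd l) j" using cel_bound by (simp add: le_fun_def)
    moreover have "flr t j \<le> cel t j" using flr_le_cel by (simp add: le_fun_def)
    ultimately show ?thesis by simp
  qed
  then show ?thesis by (simp add: le_fun_def)
qed

lemma segv_props:
  defines "p \<equiv> fst l" and "r \<equiv> snd l"
  shows "segv l (flr t) (cel t) \<in> Emor k n"
    "fst (fst (segv l (flr t) (cel t))) = (\<lambda>j. fst p j + flr t j)"
    "fst (snd (segv l (flr t) (cel t))) = (\<lambda>j. fst p j + cel t j)"
    "fst (segv l (flr t) (cel t)) = pick p r (\<lambda>j. fst p j + flr t j)"
    "snd (segv l (flr t) (cel t)) = pick p r (\<lambda>j. fst p j + cel t j)"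
proof -
  have p: "p \<in> Pset k n" and r: "r \<in> Pset k n" and pr: "lep p r" using l by (auto simp: Emor_iff p_def r_def)
  have c1: "fst p \<le> (\<lambda>j. fst p j + flr t j)" by (simp add: le_fun_def)
  have c12: "(\<lambda>j. fst p j + flr t j) \<le> (\<lambda>j. fst p j + cel t j)" using flr_le_cel by (simp add: le_fun_def)
  have c2: "(\<lambda>j. fst p j + cel t j) \<le> fst r" using cel_bound by (simp add: p_def r_def)
  have c1': "(\<lambda>j. fst p j + flr t j) \<le> fst r" using c12 c2 by (rule order_trans)
  have c2': "fst p \<le> (\<lambda>j. fst p j + cel t j)" by (simp add: le_fun_def)
  note A = pick_props[OF k p r pr c1 c1'] and B = pick_props[OF k p r pr c2' c2]
  have mono: "lep (pick p r (\<lambda>j. fst p j + flr t j)) (pick p r (\<lambda>j. fst p j + cel t j))"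
    by (rule pick_mono[OF k p r pr c1 c12 c2])
  have sv: "segv l (flr t) (cel t) = (pick p r (\<lambda>j. fst p j + flr t j), pick p r (\<lambda>j. fst p j + cel t j))"
    by (simp add: segv_def p_def r_def)
  show "segv l (flr t) (cel t) \<in> Emor k n" using A B mono sv by (simp add: Emor_iff)
  show "fst (fst (segv l (flr t) (cel t))) = (\<lambda>j. fst p j + flr t j)" using A sv by simp
  show "fst (snd (segv l (flr t) (cel t))) = (\<lambda>j. fst p j + cel t j)" using B sv by simp
  show "fst (segv l (flr t) (cel t)) = pick p r (\<lambda>j. fst p j + flr t j)" using sv by simp
  show "snd (segv l (flr t) (cel t)) = pick p r (\<lambda>j. fst p j + cel t j)" using sv by simp
qed

lemma key_valid: "validkey k n (segv l (flr t) (cel t)) (fracp t)"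
  unfolding validkey_def
proof (intro conjI allI impI)
  show "segv l (flr t) (cel t) \<in> Emor k n" by (rule segv_props(1))
  fix j
  show "0 \<le> fracp t j" "fracp t j < 1" by (simp_all add: fracp_def) linarith
  show "fst (snd (segv l (flr t) (cel t))) j = fst (fst (segv l (flr t) (cel t))) j + (if 0 < fracp t j then 1 else 0)"
    using segv_props(2,3) cel_flr[OF t_ge[of j]] by (simp add: fracp_def flr_def cel_def)
next
  fix j assume "k \<le> j" then show "fracp t j = 0" using t_beyond by (simp add: fracp_def)
qed

lemma TT_key: "TT (fst (segv l (flr t) (cel t))) (fracp t) = (\<lambda>j. real (fst (fst l) j) + t j)"
proof
  fix j
  have "real (nat \<lfloor>t j\<rfloor>) = of_int \<lfloor>t j\<rfloor>" using t_ge[of j] by simp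
  then show "TT (fst (segv l (flr t) (cel t))) (fracp t) j = real (fst (fst l) j) + t j"
    using segv_props(2) by (simp add: TT_def fracp_def flr_def)
qed

end


lemma Pset_le1: "e \<in> Pset k n \<Longrightarrow> fst e j \<le> 1"
  using Pset_le_one[of e k n] by (auto simp: le_fun_def one_def dest!: spec[of _ j] split: if_splits)

lemma Gk_formula:
  assumes k: "0 < k" and l: "l \<in> Emor k n"
    and t: "t \<in> topspace (cube k (\<lambda>j. fst (snd l) j - fst (fst l) j))"
  shows "Gk k (segv l (flr t) (cel t)) (fracp t) =
         Ext k (snd (snd (snd l))) (Sv k (sg (fst l)) (sg (snd l)) (\<lambda>j. real (fst (fst l) j) + t j))"
proof -
  define p where "p = fst l"
  define r where "r = snd l"
  define u where "u = fst (segv l (flr t) (cel t))"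
  define v where "v = snd (segv l (flr t) (cel t))"
  define T where "T = (\<lambda>j. real (fst p j) + t j)"
  have p: "p \<in> Pset k n" and r: "r \<in> Pset k n" and pr: "lep p r" using l by (auto simp: Emor_iff p_def r_def)
  have vk: "validkey k n (u, v) (fracp t)" using key_valid[OF k l t] by (simp add: u_def v_def)
  have TTe: "TT u (fracp t) = T" using TT_key[OF k l t] by (simp add: u_def T_def p_def)
  have box: "inbox k T" using TT_box[OF k vk] TTe by simp
  have u: "u = pick p r (\<lambda>j. fst p j + flr t j)" and v: "v = pick p r (\<lambda>j. fst p j + cel t j)"
    using segv_props(4,5)[OF k l t] by (simp_all add: u_def v_def p_def r_def)
  have G: "Gk k (segv l (flr t) (cel t)) (fracp t) = Ext k (snd (snd v)) (Sv k (sg u) (sg v) T)"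
    using TTe by (simp add: Gk_def u_def v_def TT_def)
  have e0: "sg u * (1 - Mx k T) = sg p * (1 - Mx k T)"
  proof (cases "u = p")
    case False
    then have "(\<lambda>j. fst p j + flr t j) \<noteq> fst p" using u by (auto simp: pick_def)
    then obtain j where j: "flr t j \<noteq> 0" by (auto simp: fun_eq_iff)
    then have "t j \<ge> 1" by (simp add: flr_def)
    then have "j < k" using t_beyond[OF k l t, of j] by (cases "j < k") auto
    have "1 \<le> T j" using \<open>t j \<ge> 1\<close> by (simp add: T_def)
    then have "Mx k T = 1" using Mx_ge[OF \<open>j < k\<close>, of T] Mx_box[OF k box] by simp
    then show ?thesis by simp
  qed simp
  have e1: "sg v * Mn k T = sg r * Mn k T"
  proof (cases "v = r")
    case False
    have "(\<lambda>j. fst p j + cel t j) \<noteq> fst r"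
    proof
      assume a: "(\<lambda>j. fst p j + cel t j) = fst r"
      show False
      proof (cases "(\<lambda>j. fst p j + cel t j) = fst p")
        case True
        then have "fst p = fst r" using a by simp
        then have "p = r" using lep_eq[OF pr] by simp
        then show False using False v True by (simp add: pick_def)
      next
        case False
        then show False using \<open>v \<noteq> r\<close> v a by (simp add: pick_def)
      qed
    qed
    then obtain j where j: "fst p j + cel t j \<noteq> fst r j" by (auto simp: fun_eq_iff)
    have le: "fst p j + cel t j \<le> fst r j" using cel_bound[OF k l t] by (simp add: le_fun_def p_def r_def)
    have r1: "fst r j \<le> 1" using Pset_le1[OF r] .
    have "cel t j = 0" "fst p j = 0" using j le r1 by auto
    then have "t j \<le> 0" by (simp add: cel_def)
    then have tj: "t j = 0" using t_ge[OF k l t, of j] by simp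
    have "j < k"
    proof (rule ccontr)
      assume "\<not> j < k"
      then have "fst r j = 0" using le_one_beyond[OF Pset_le_one[OF r], of j] by simp
      then show False using j le by simp
    qed
    have "T j = 0" using tj \<open>fst p j = 0\<close> by (simp add: T_def)
    then have "Mn k T = 0" using Mn_le[OF \<open>j < k\<close>, of T] Mn_box[OF k box] by simp
    then show ?thesis by simp
  qed simp
  have SS: "Sv k (sg u) (sg v) T = Sv k (sg p) (sg r) T"
    using e0 e1 by (auto simp: Sv_def fun_eq_iff)
  have cp: "Ext k (snd (snd v)) (Sv k (sg p) (sg r) T) = Ext k (snd (snd r)) (Sv k (sg p) (sg r) T)"
  proof (cases "v = r")
    case False
    show ?thesis
    proof (cases "(\<lambda>j. fst p j + cel t j) = fst p")
      case True
      then have vp: "v = p" using v by (simp add: pick_def)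
      have "p \<noteq> r" using vp False by simp
      then have "p = zA \<or> snd (snd p) = snd (snd r)" using pr by (auto simp: lep_def)
      then show ?thesis
      proof
        assume pz: "p = zA"
        have "cel t j = 0" for j using True by (simp add: fun_eq_iff)
        then have "t j \<le> 0" for j by (simp add: cel_def)
        then have "T j = 0" for j using pz t_ge[OF k l t] by (simp add: T_def zA_def zr_def) (meson order.antisym)
        then have "Mx k T = 0" using Mx_in[OF k, of T] by auto
        then have "Sv k (sg p) (sg r) T 0 = 1" using pz by (simp add: Sv_def sg_def zA_def)
        then show ?thesis by (rule Ext_same)
      qed (use vp in simp)
    next
      case nt: False
      have "(\<lambda>j. fst p j + cel t j) \<noteq> fst r"
      proof
        assume "(\<lambda>j. fst p j + cel t j) = fst r"
        then show False using v False nt by (simp add: pick_def)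
      qed
      then have "snd (snd v) = snd (snd r)" using v nt by (simp add: pick_def)
      then show ?thesis by simp
    qed
  qed simp
  show ?thesis using G SS cp by (simp add: p_def r_def T_def)
qed

lemma cont_cube_proj: "continuous_map (cube k d) euclideanreal (\<lambda>t. t j)"
  unfolding cube_def Euclidean_space_def
  by (intro continuous_map_from_subtopology continuous_map_product_projection) auto

lemma Mx_Suc: "Mx (Suc k) T = (if k = 0 then T 0 else max (T k) (Mx k T))"
proof (cases "k = 0")
  case False
  have "T ` {..<Suc k} = insert (T k) (T ` {..<k})" by (simp add: lessThan_Suc)
  moreover have "T ` {..<k} \<noteq> {}" using False by auto
  ultimately show ?thesis using False by (simp add: Mx_def)
next
  case True
  have "T ` {..<Suc 0} = {T 0}" by auto
  then show ?thesis using True by (simp add: Mx_def)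
qed

lemma Mn_Suc: "Mn (Suc k) T = (if k = 0 then T 0 else min (T k) (Mn k T))"
proof (cases "k = 0")
  case False
  have "T ` {..<Suc k} = insert (T k) (T ` {..<k})" by (simp add: lessThan_Suc)
  moreover have "T ` {..<k} \<noteq> {}" using False by auto
  ultimately show ?thesis using False by (simp add: Mn_def)
next
  case True
  have "T ` {..<Suc 0} = {T 0}" by auto
  then show ?thesis using True by (simp add: Mn_def)
qed

lemma cont_Mx: "0 < k \<Longrightarrow> (\<And>j. j < k \<Longrightarrow> continuous_map X euclideanreal (\<lambda>x. g x j))
   \<Longrightarrow> continuous_map X euclideanreal (\<lambda>x. Mx k (g x))"
proof (induction k)
  case 0 then show ?case by simp
next
  case (Suc k)
  show ?case
  proof (cases "k = 0")
    case True then show ?thesis using Suc.prems by (simp add: Mx_Suc)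
  next
    case False
    then show ?thesis unfolding Mx_Suc using Suc by (simp add: continuous_map_real_max)
  qed
qed

lemma cont_Mn: "0 < k \<Longrightarrow> (\<And>j. j < k \<Longrightarrow> continuous_map X euclideanreal (\<lambda>x. g x j))
   \<Longrightarrow> continuous_map X euclideanreal (\<lambda>x. Mn k (g x))"
proof (induction k)
  case 0 then show ?case by simp
next
  case (Suc k)
  show ?case
  proof (cases "k = 0")
    case True then show ?thesis using Suc.prems by (simp add: Mn_Suc)
  next
    case False
    then show ?thesis unfolding Mn_Suc using Suc by (simp add: continuous_map_real_min)
  qed
qed

lemma cont_formula:
  assumes k: "0 < k"
  shows "continuous_map (cube k d) (powertop_real UNIV) (\<lambda>t. Ext k c (Sv k s1 s2 (\<lambda>j. real (a j) + t j)))"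
  unfolding continuous_map_componentwise_UNIV
proof
  fix j
  have pj: "continuous_map (cube k d) euclideanreal (\<lambda>t. real (a i) + t i)" for i
    by (intro continuous_intros cont_cube_proj)
  have mx: "continuous_map (cube k d) euclideanreal (\<lambda>t. Mx k (\<lambda>j. real (a j) + t j))"
    by (rule cont_Mx[OF k pj])
  have mn: "continuous_map (cube k d) euclideanreal (\<lambda>t. Mn k (\<lambda>j. real (a j) + t j))"
    by (rule cont_Mn[OF k pj])
  have sv: "continuous_map (cube k d) euclideanreal (\<lambda>t. Sv k s1 s2 (\<lambda>j. real (a j) + t j) i)" for i
  proof -
    consider "i = 0" | "i = 1" | "i \<noteq> 0 \<and> i \<noteq> 1 \<and> i \<le> k" | "i \<noteq> 0 \<and> i \<noteq> 1 \<and> \<not> i \<le> k" by blast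
    then show ?thesis
    proof cases
      case 1 then show ?thesis unfolding Sv_def using mx by (simp add: continuous_intros)
    next
      case 2 then show ?thesis unfolding Sv_def using mn by (simp add: continuous_intros)
    next
      case 3 then show ?thesis unfolding Sv_def by (simp add: pj continuous_intros)
    next
      case 4 then show ?thesis unfolding Sv_def by simp
    qed
  qed
  show "continuous_map (cube k d) euclideanreal (\<lambda>t. Ext k c (Sv k s1 s2 (\<lambda>j. real (a j) + t j)) j)"
    unfolding Ext_def using sv by (cases "j = Suc k") (simp_all add: continuous_intros)
qed


definition dec :: "nat \<Rightarrow> nat \<Rightarrow> nat \<Rightarrow> elt \<times> elt" where
  "dec k n m = inv_into (Emor k n) (enc k n) m"

definition Fm :: "nat \<Rightarrow> nat \<Rightarrow> nat \<times> (nat \<Rightarrow> real) \<Rightarrow> (nat \<Rightarrow> real)" where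
  "Fm k n p = Gk k (segv (dec k n (fst p)) (flr (snd p)) (cel (snd p))) (fracp (snd p))"

definition XR :: "nat \<Rightarrow> nat \<Rightarrow> (nat \<times> (nat \<Rightarrow> real)) topology" where
  "XR k n = sum_topology (\<lambda>m. cube k (deg (LL k n) m)) (Mor (LL k n))"

lemma LL_Mor: "Mor (LL k n) = enc k n ` Emor k n"
  by (simp add: LL_def transp_def)

lemma dec_enc[simp]: "l \<in> Emor k n \<Longrightarrow> dec k n (enc k n l) = l"
  unfolding dec_def using inj_enc by (simp add: inv_into_f_f)

lemma LL_deg: "l \<in> Emor k n \<Longrightarrow> deg (LL k n) (enc k n l) = (\<lambda>j. fst (snd l) j - fst (fst l) j)"
  by (simp add: LL_def transp_def dec_def[symmetric])

lemma enc_eq: "l \<in> Emor k n \<Longrightarrow> l' \<in> Emor k n \<Longrightarrow> enc k n l = enc k n l' \<longleftrightarrow> l = l'"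
  using inj_enc by (meson inj_on_eq_iff)

lemma XR_point:
  assumes "p \<in> topspace (XR k n)"
  obtains l t where "l \<in> Emor k n" "p = (enc k n l, t)" "t \<in> topspace (cube k (\<lambda>j. fst (snd l) j - fst (fst l) j))"
  using assms by (auto simp: XR_def LL_Mor LL_deg)

lemma Fm_enc: "l \<in> Emor k n \<Longrightarrow> Fm k n (enc k n l, t) = Gk k (segv l (flr t) (cel t)) (fracp t)"
  by (simp add: Fm_def)

lemma rel_iff:
  assumes k: "0 < k" and p: "p \<in> topspace (XR k n)" and q: "q \<in> topspace (XR k n)"
  shows "real_rel (LL k n) p q \<longleftrightarrow> Fm k n p = Fm k n q"
proof -
  obtain l s where l: "l \<in> Emor k n" "p = (enc k n l, s)" "s \<in> topspace (cube k (\<lambda>j. fst (snd l) j - fst (fst l) j))"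
    using XR_point[OF p] by blast
  obtain l' t where l': "l' \<in> Emor k n" "q = (enc k n l', t)" "t \<in> topspace (cube k (\<lambda>j. fst (snd l') j - fst (fst l') j))"
    using XR_point[OF q] by blast
  have s1: "seg (LL k n) (enc k n l) (flr s) (cel s) = enc k n (segv l (flr s) (cel s))"
    by (rule seg_LL[OF k l(1) flr_le_cel[OF k l(1) l(3)] cel_bound[OF k l(1) l(3)]])
  have s2: "seg (LL k n) (enc k n l') (flr t) (cel t) = enc k n (segv l' (flr t) (cel t))"
    by (rule seg_LL[OF k l'(1) flr_le_cel[OF k l'(1) l'(3)] cel_bound[OF k l'(1) l'(3)]])
  have "real_rel (LL k n) p q \<longleftrightarrow> segv l (flr s) (cel s) = segv l' (flr t) (cel t) \<and> fracp s = fracp t"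
    unfolding real_rel_def l(2) l'(2) using s1 s2 enc_eq[OF segv_props(1)[OF k l(1) l(3)] segv_props(1)[OF k l'(1) l'(3)]]
    by (simp add: fracp_def)
  also have "\<dots> \<longleftrightarrow> Fm k n p = Fm k n q"
  proof
    assume "segv l (flr s) (cel s) = segv l' (flr t) (cel t) \<and> fracp s = fracp t"
    then show "Fm k n p = Fm k n q" using l l' by (simp add: Fm_enc)
  next
    assume e: "Fm k n p = Fm k n q"
    have v1: "validkey k n (fst (segv l (flr s) (cel s)), snd (segv l (flr s) (cel s))) (fracp s)"
      using key_valid[OF k l(1) l(3)] by simp
    have v2: "validkey k n (fst (segv l' (flr t) (cel t)), snd (segv l' (flr t) (cel t))) (fracp t)"
      using key_valid[OF k l'(1) l'(3)] by simp
    have "Gk k (fst (segv l (flr s) (cel s)), snd (segv l (flr s) (cel s))) (fracp s) =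
          Gk k (fst (segv l' (flr t) (cel t)), snd (segv l' (flr t) (cel t))) (fracp t)"
      using e l l' by (simp add: Fm_enc)
    from Gk_inj[OF k v1 v2 this]
    show "segv l (flr s) (cel s) = segv l' (flr t) (cel t) \<and> fracp s = fracp t" by (simp add: prod_eq_iff)
  qed
  finally show ?thesis .
qed

lemma cont_Fm:
  assumes k: "0 < k"
  shows "continuous_map (XR k n) (powertop_real UNIV) (Fm k n)"
  unfolding XR_def
proof (rule continuous_map_from_sum)
  fix m assume "m \<in> Mor (LL k n)"
  then obtain l where l: "l \<in> Emor k n" "m = enc k n l" by (auto simp: LL_Mor)
  have c: "continuous_map (cube k (\<lambda>j. fst (snd l) j - fst (fst l) j)) (powertop_real UNIV)
      (\<lambda>t. Ext k (snd (snd (snd l))) (Sv k (sg (fst l)) (sg (snd l)) (\<lambda>j. real (fst (fst l) j) + t j)))"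
    by (rule cont_formula[OF k])
  show "continuous_map (cube k (deg (LL k n) m)) (powertop_real UNIV) (\<lambda>t. Fm k n (m, t))"
    unfolding l(2) LL_deg[OF l(1)]
    by (rule continuous_map_eq[OF c]) (simp add: Fm_enc[OF l(1)] Gk_formula[OF k l(1)])
qed

lemma compact_cube: "compact_space (cube k d)"
proof -
  define B where "B = (\<lambda>i. if i < k then {0..real (d i)} else {0::real})"
  have e: "cube k d = subtopology (powertop_real UNIV) (PiE UNIV B)"
  proof -
    have "{x. \<forall>i\<ge>k. x i = 0} \<inter> {t. \<forall>i<k. 0 \<le> t i \<and> t i \<le> real (d i)} = PiE UNIV B"
      by (auto simp: B_def PiE_UNIV_domain Pi_iff not_le split: if_splits)
    then show ?thesis by (simp add: cube_def Euclidean_space_def subtopology_subtopology)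
  qed
  have "compactin (powertop_real UNIV) (PiE UNIV B)"
    by (simp add: compactin_PiE B_def)
  then show ?thesis unfolding e by (rule compact_space_subtopology)
qed

lemma compact_XR: "compact_space (XR k n)"
  unfolding XR_def
  by (rule compact_sum_finite) (simp_all add: LL_Mor finite_Emor compact_cube)


lemma Pset_cp: "e \<in> Pset k n \<Longrightarrow> 0 < n \<Longrightarrow> snd (snd e) < n"
  unfolding Pset_def by (auto split: if_splits)

lemma nsphere_mem: "x \<in> topspace (nsphere k) \<longleftrightarrow> (\<Sum>i\<le>k. x i ^ 2) = 1 \<and> (\<forall>i>k. x i = 0)"
  by (simp add: topspace_nsphere')

lemma normalize_to_sphere:
  assumes k: "0 < k" and r: "rho k S = 1" and b: "\<And>j. k < j \<Longrightarrow> S j = 0"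
  shows "\<exists>x \<in> topspace (nsphere k). Phi k (i, x) = Ext k i S"
proof -
  define N where "N = sqrt (\<Sum>j\<le>k. S j ^ 2)"
  have N0: "0 < N"
  proof (rule ccontr)
    assume "\<not> 0 < N"
    then have "(\<Sum>j\<le>k. S j ^ 2) = 0" unfolding N_def
      by (metis le_less real_sqrt_gt_zero sum_nonneg zero_le_power2 real_sqrt_eq_zero_cancel_iff)
    then have z: "S j = 0" if "j \<le> k" for j
      using that by (subst (asm) sum_nonneg_eq_0_iff) auto
    have "nu k S = 0"
    proof -
      have e: "insert 0 (S ` {2..k}) = {0}" using z by auto
      show ?thesis unfolding nu_def e by simp
    qed
    then have "rho k S = 0" using z k by (simp add: rho_def)
    then show False using r by simp
  qed
  define x where "x = (\<lambda>j. S j / N)"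
  have "(\<Sum>j\<le>k. x j ^ 2) = (\<Sum>j\<le>k. S j ^ 2) / N ^ 2"
    by (simp add: x_def power_divide sum_divide_distrib)
  also have "\<dots> = 1" using N0 unfolding N_def
    by (simp add: sum_nonneg)
  finally have xs: "x \<in> topspace (nsphere k)" using b by (simp add: nsphere_mem x_def)
  have "rho k x = 1 / N" using rho_scale[OF N0, of k S] r by (simp add: x_def)
  then have "(\<lambda>j. x j / rho k x) = S" using N0 by (simp add: x_def fun_eq_iff)
  then have "Phi k (i, x) = Ext k i S" by (simp add: Phi_def)
  then show ?thesis using xs by blast
qed

lemma img_sub:
  assumes k: "0 < k" and n: "0 < n" and p: "p \<in> topspace (XR k n)"
  shows "Fm k n p \<in> Phi k ` topspace (sum_topology (\<lambda>i. nsphere k) {..<n})"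
proof -
  obtain l t where l: "l \<in> Emor k n" "p = (enc k n l, t)" "t \<in> topspace (cube k (\<lambda>j. fst (snd l) j - fst (fst l) j))"
    using XR_point[OF p] by blast
  define u where "u = fst (segv l (flr t) (cel t))"
  define v where "v = snd (segv l (flr t) (cel t))"
  have vk: "validkey k n (u, v) (fracp t)" using key_valid[OF k l(1) l(3)] by (simp add: u_def v_def)
  define S where "S = Sv k (sg u) (sg v) (TT u (fracp t))"
  have F: "Fm k n p = Ext k (snd (snd v)) S"
    using l by (simp add: Fm_enc Gk_def S_def u_def v_def TT_def)
  have r: "rho k S = 1" unfolding S_def by (rule rho_Sv[OF k TT_box[OF k vk] abs_sg abs_sg])
  have b: "\<And>j. k < j \<Longrightarrow> S j = 0" by (simp add: S_def Sv_beyond[OF k])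
  obtain x where x: "x \<in> topspace (nsphere k)" "Phi k (snd (snd v), x) = Ext k (snd (snd v)) S"
    using normalize_to_sphere[OF k r b] by blast
  have "snd (snd v) < n" using Pset_cp[OF vk_v[OF k vk] n] .
  then have "(snd (snd v), x) \<in> topspace (sum_topology (\<lambda>i. nsphere k) {..<n})" using x(1) by simp
  then show ?thesis using x(2) F by (metis image_eqI)
qed


lemma img_sup:
  assumes k: "0 < k" and i: "i < n" and x: "x \<in> topspace (nsphere k)"
  shows "Phi k (i, x) \<in> Fm k n ` topspace (XR k n)"
proof -
  define S where "S = (\<lambda>j. x j / rho k x)"
  have rx: "0 < rho k x" by (rule rho_pos[OF x])
  have rS: "rho k S = 1" using rho_scale[OF rx, of k x] rx by (simp add: S_def)
  have Sb: "S j = 0" if "k < j" for j using x that by (simp add: S_def nsphere_mem)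
  have PhiS: "Phi k (i, x) = Ext k i S" by (simp add: Phi_def S_def)
  define c0 where "c0 = Min (insert 0 (S ` {2..k}))"
  define T where "T = (\<lambda>j. if j < k then (if j = k - 1 then 0 else S (j + 2)) + (\<bar>S 1\<bar> - c0) else 0)"
  have Tk: "T (k - 1) = \<bar>S 1\<bar> - c0" using k by (simp add: T_def)
  have SvS: "Sv k s1 s2 T j = S j" if "j \<in> {2..k}" for s1 s2 j
  proof -
    have "j - 2 < k" "j - 2 \<noteq> k - 1 \<longrightarrow> j - 2 + 2 = j" using that by auto
    then show ?thesis using that k by (auto simp: Sv_def T_def)
  qed
  have imgS: "S ` {2..k} = Sv k 1 1 T ` {2..k}" using SvS by (auto intro: image_cong)
  have nuS: "nu k S = Mx k T - Mn k T"
    using nu_Sv[OF k, of 1 1 T] by (simp add: nu_def imgS)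
  have mnT: "Mn k T = \<bar>S 1\<bar>"
  proof -
    have "c0 = Min ((\<lambda>y. y - T (k - 1)) ` (T ` {..<k}))"
      unfolding c0_def imgS Sv_set[OF k] by (simp add: image_image)
    also have "\<dots> = Min (T ` {..<k}) - T (k - 1)"
      by (rule mono_Min_commute[symmetric]) (use k in \<open>auto simp: mono_def\<close>)
    finally show ?thesis using Tk by (simp add: Mn_def)
  qed
  have mxT: "Mx k T = 1 - \<bar>S 0\<bar>" using rS nuS mnT by (simp add: rho_def)
  have box: "inbox k T"
    unfolding inbox_def
  proof (intro conjI allI impI)
    fix j assume "j < k"
    then show "0 \<le> T j" "T j \<le> 1" using Mn_le[of j k T] Mx_ge[of j k T] mnT mxT by auto
  next
    fix j assume "k \<le> j" then show "T j = 0" by (simp add: T_def)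
  qed
  have T01: "0 \<le> T j" "T j \<le> 1" for j using box by (cases "j < k"; auto simp: inbox_def)+
  define h0 where "h0 = (\<lambda>j. nat \<lfloor>T j\<rfloor>)"
  define h1 where "h1 = (\<lambda>j. nat \<lceil>T j\<rceil>)"
  define fr where "fr = fracp T"
  have fr01: "0 \<le> fr j" "fr j < 1" for j by (simp_all add: fr_def fracp_def) linarith
  have frb: "fr j = 0" if "k \<le> j" for j using box that by (simp add: fr_def fracp_def inbox_def)
  have hfr: "h1 j = h0 j + (if fr j > 0 then 1 else 0)" for j
    using cel_flr[OF T01(1)[of j]] by (simp add: h0_def h1_def fr_def fracp_def)
  have Thf: "real (h0 j) + fr j = T j" for j using T01(1)[of j] by (simp add: h0_def fr_def fracp_def)
  have h0le: "h0 j \<le> 1" "h1 j \<le> 1" for j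
  proof -
    have "\<lfloor>T j\<rfloor> \<le> \<lfloor>1::real\<rfloor>" by (rule floor_mono) (use T01 in auto)
    then have "nat \<lfloor>T j\<rfloor> \<le> nat \<lfloor>1::real\<rfloor>" by (rule nat_mono)
    then show "h0 j \<le> 1" unfolding h0_def by simp
    have "\<lceil>T j\<rceil> \<le> 1" using T01(2)[of j] by (simp add: ceiling_le_iff)
    then show "h1 j \<le> 1" by (simp add: h1_def)
  qed
  have h0b: "h0 j = 0" "h1 j = 0" if "k \<le> j" for j using box that by (auto simp: h0_def h1_def inbox_def)
  have h0one: "h0 \<le> one k" "h1 \<le> one k" using h0le h0b by (auto simp: le_fun_def one_def not_less)
  have h01: "h0 \<le> h1" using hfr by (simp add: le_fun_def)
  have zo: "zr \<noteq> one k" by (rule zr_ne_one[OF k])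
  have mx_lt: "Mx k T < 1" if "h0 = zr"
  proof -
    obtain j where j: "j < k" "Mx k T = T j" using Mx_in[OF k] by blast
    have "h0 j = 0" using that by (simp add: zr_def)
    then have "T j < 1" using T01(1)[of j] by (simp add: h0_def; linarith)
    then show ?thesis using j by simp
  qed
  have mx_one: "Mx k T = 1" if nz: "h0 \<noteq> zr"
  proof -
    obtain j where j: "j < k" "h0 j \<noteq> 0" using fst_ne_zr_ex[OF nz h0one(1)] by blast
    then have "T j \<ge> 1" by (simp add: h0_def; linarith)
    then show ?thesis using Mx_ge[OF j(1), of T] T01 Mx_box[OF k box] by simp
  qed
  have mn_pos: "0 < Mn k T" if "h1 = one k"
  proof -
    obtain j where j: "j < k" "Mn k T = T j" using Mn_in[OF k] by blast
    have "h1 j = 1" using that j by (simp add: one_def)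
    then have "T j > 0" by (simp add: h1_def; linarith)
    then show ?thesis using j by simp
  qed
  have mn_zero: "Mn k T = 0" if no: "h1 \<noteq> one k"
  proof -
    obtain j where j: "j < k" "h1 j = 0" using fst_le_one_ex[OF h0one(2) no] by blast
    then have "T j \<le> 0" by (simp add: h1_def)
    then show ?thesis using Mn_le[OF j(1), of T] Mn_box[OF k box] by simp
  qed
  define xs where "xs = (if S 1 < 0 then 1 else 0 :: nat)"
  define u where "u = (if h0 = zr then (if S 0 < 0 then (zr, 1, i) else zA) else (h0, if h0 = one k then xs else 0, i))"
  define v where "v = (if h1 = zr then u else (h1, if h1 = one k then xs else 0, i))"
  have fu: "fst u = h0" by (simp add: u_def zA_def)
  have h1z: "h0 = zr" if "h1 = zr" using h01 that by (auto simp: le_fun_def zr_def fun_eq_iff intro: le_antisym)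
  have fv: "fst v = h1" using h1z fu by (simp add: v_def)
  have uP: "u \<in> Pset k n"
    using h0one i zo by (auto simp: u_def Pset_def zA_def xs_def)
  have vP: "v \<in> Pset k n"
    using h0one i zo uP by (auto simp: v_def Pset_def xs_def)
  have cpu: "u = zA \<or> snd (snd u) = i" by (auto simp: u_def)
  have uv: "lep u v"
  proof (cases "h1 = zr")
    case True then show ?thesis by (simp add: v_def)
  next
    case False
    show ?thesis
    proof (cases "h0 = h1")
      case True
      then have "h0 \<noteq> zr" using False by simp
      then show ?thesis using True False by (simp add: u_def v_def)
    next
      case False
      then show ?thesis using h01 fu fv cpu \<open>h1 \<noteq> zr\<close> by (auto simp: lep_def v_def)
    qed
  qed
  have vk: "validkey k n (u, v) fr"
    unfolding validkey_def using uP vP uv fr01 frb hfr fu fv by (simp add: Emor_iff)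
  have TTe: "TT u fr = T" using Thf fu by (simp add: TT_def fun_eq_iff)
  have sgu: "sg u = (if S 0 < 0 then -1 else 1)" if "h0 = zr" using that by (simp add: u_def sg_def zA_def)
  have sgv: "sg v = (if S 1 < 0 then -1 else 1)" if "h1 = one k" using that zo by (simp add: v_def sg_def xs_def)
  have SvE: "Sv k (sg u) (sg v) T = S"
  proof
    fix j
    consider "j = 0" | "j = 1" | "j \<in> {2..k}" | "k < j" using k by force
    then show "Sv k (sg u) (sg v) T j = S j"
    proof cases
      case 1
      show ?thesis
      proof (cases "h0 = zr")
        case True then show ?thesis using 1 sgu mxT by (simp add: Sv_def)
      next
        case False then show ?thesis using 1 mx_one mxT by (simp add: Sv_def)
      qed
    next
      case 2
      show ?thesis
      proof (cases "h1 = one k")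
        case True then show ?thesis using 2 sgv mnT by (simp add: Sv_def)
      next
        case False then show ?thesis using 2 mn_zero mnT by (simp add: Sv_def)
      qed
    next
      case 3 then show ?thesis by (rule SvS)
    next
      case 4 then show ?thesis using Sb Sv_beyond[OF k] by simp
    qed
  qed
  have Gv: "Gk k (u, v) fr = Ext k i S"
  proof -
    have G: "Gk k (u, v) fr = Ext k (snd (snd v)) S" using TTe SvE by (simp add: Gk_def TT_def)
    show ?thesis
    proof (cases "v = zA")
      case True
      then have "h1 = zr" using fv by (simp add: zA_def)
      then have "h0 = zr" by (rule h1z)
      have "T j = 0" for j
      proof (cases "j < k")
        case True
        have "h1 j = 0" using \<open>h1 = zr\<close> by (simp add: zr_def)
        then show ?thesis using T01[of j] by (simp add: h1_def)
      next
        case False then show ?thesis using box by (simp add: inbox_def)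
      qed
      then have "Mx k T = 0" using Mx_in[OF k, of T] by auto
      then have a: "\<bar>S 0\<bar> = 1" using mxT by simp
      have "u = zA" using True \<open>h1 = zr\<close> by (simp add: v_def)
      then have "\<not> S 0 < 0" using \<open>h0 = zr\<close> by (auto simp: u_def zA_def)
      then have "S 0 = 1" using a by simp
      then show ?thesis using G by (simp add: Ext_same)
    next
      case False
      then have "snd (snd v) = i" using cpu by (auto simp: v_def)
      then show ?thesis using G by simp
    qed
  qed
  define pnt where "pnt = (enc k n (u, v), fr)"
  have uvE: "(u, v) \<in> Emor k n" using vk by (simp add: validkey_def)
  have frc: "fr \<in> topspace (cube k (\<lambda>j. fst (snd (u, v)) j - fst (fst (u, v)) j))"
    unfolding topspace_cube using fr01 frb hfr fu fv by (auto simp: less_le)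
  have pin: "pnt \<in> topspace (XR k n)"
    using uvE frc by (simp add: pnt_def XR_def LL_Mor LL_deg)
  have flr0: "flr fr = (\<lambda>j. 0)" using fr01 by (simp add: flr_def fun_eq_iff floor_eq_iff)
  have cel1: "(\<lambda>j. h0 j + cel fr j) = h1"
  proof
    fix j
    have "nat \<lceil>fr j\<rceil> = (if fr j > 0 then 1 else 0)"
    proof -
      have "\<lfloor>fr j\<rfloor> = 0" using fr01[of j] by (simp add: floor_eq_iff)
      then show ?thesis using cel_flr[OF fr01(1)[of j]] by simp
    qed
    then show "h0 j + cel fr j = h1 j" using hfr by (simp add: cel_def)
  qed
  have sg: "segv (u, v) (flr fr) (cel fr) = (u, v)"
  proof -
    have a: "pick u v h0 = u" using fu by (simp add: pick_def)
    have b: "pick u v h1 = v" using fu fv lep_eq[OF uv] by (auto simp: pick_def)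
    show ?thesis using a b cel1 flr0 fu by (simp add: segv_def)
  qed
  have frf: "fracp fr = fr" using fr01 by (simp add: fracp_def fun_eq_iff floor_eq_iff)
  have "Fm k n pnt = Phi k (i, x)"
    using uvE sg frf Gv PhiS by (simp add: pnt_def Fm_enc)
  then show ?thesis using pin by (metis image_eqI)
qed


lemma discrete_homeo:
  assumes "finite A" "finite B" "card A = card B"
  shows "discrete_topology A homeomorphic_space discrete_topology B"
proof -
  obtain h where h: "bij_betw h A B" using finite_same_card_bij[OF assms] by blast
  have "homeomorphic_maps (discrete_topology A) (discrete_topology B) h (inv_into A h)"
    unfolding homeomorphic_maps_def using h
    by (auto simp: bij_betw_def inv_into_f_f f_inv_into_f inv_into_into)
  then show ?thesis by (rule homeomorphic_maps_imp_homeomorphic_space)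
qed

definition L00 :: "nat \<Rightarrow> nat kgraph" where
  "L00 n = \<lparr>Mor = {..n}, src = (\<lambda>x. x), rng = (\<lambda>x. x), comp = (\<lambda>a b. a), deg = (\<lambda>_ _. 0)\<rparr>"

lemma in_Nk0: "in_Nk 0 m \<longleftrightarrow> m = (\<lambda>_. 0)"
  by (auto simp: in_Nk_def fun_eq_iff)

lemma kgraph_L00: "is_kgraph 0 (L00 n)"
  unfolding is_kgraph_def small_category_def
  by (auto simp: L00_def in_Nk0 intro!: ex1I[of _ "(l, l)" for l])

lemma finite_L00: "finite_kgraph (L00 n)"
  by (simp add: finite_kgraph_def L00_def)

lemma nsphere0: "topspace (nsphere 0) = {sphere_base, (\<lambda>j. if j = 0 then -1 else 0)}"
proof -
  have "x \<in> topspace (nsphere 0) \<longleftrightarrow> x = sphere_base \<or> x = (\<lambda>j. if j = 0 then -1 else 0)" for x :: "nat \<Rightarrow> real"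
  proof
    assume "x \<in> topspace (nsphere 0)"
    then have a: "x 0 ^ 2 = 1" "\<forall>i>0. x i = 0" by (auto simp: nsphere_mem)
    then have "x 0 = 1 \<or> x 0 = -1" by (simp add: power2_eq_1_iff)
    then show "x = sphere_base \<or> x = (\<lambda>j. if j = 0 then -1 else 0)"
      using a by (auto simp: sphere_base_def fun_eq_iff)
  next
    assume "x = sphere_base \<or> x = (\<lambda>j. if j = 0 then -1 else 0)"
    then show "x \<in> topspace (nsphere 0)" by (auto simp: nsphere_mem sphere_base_def)
  qed
  then show ?thesis by blast
qed

lemma case_k0:
  assumes n: "1 \<le> n"
  shows "realisation 0 (L00 n) homeomorphic_space sphere_wedge n 0"
proof -
  define g :: "nat \<Rightarrow> nat \<Rightarrow> real" where "g = (\<lambda>i j. if j = 0 then -1 else if j = 1 then 2 * real i else 0)"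
  define m :: "nat \<Rightarrow> real" where "m = (\<lambda>j. if j = 0 then -1 else 0)"
  have rm: "rho 0 m = 1" by (simp add: rho_def nu_def m_def)
  have Pm: "Phi 0 (i, m) = g i" for i
    using rm by (auto simp: Phi_def Ext_def m_def g_def fun_eq_iff)
  have img: "Phi 0 ` topspace (sum_topology (\<lambda>i. nsphere 0) {..<n}) = insert sphere_base (g ` {..<n})"
  proof -
    have "topspace (sum_topology (\<lambda>i. nsphere 0) {..<n}) = {..<n} \<times> {sphere_base, m}"
      by (simp add: nsphere0 m_def)
    moreover have "Phi 0 ` ({..<n} \<times> {sphere_base, m}) = insert sphere_base (g ` {..<n})"
    proof -
      have e: "{..<n} \<times> {sphere_base, m} = (\<lambda>i. (i, sphere_base)) ` {..<n} \<union> (\<lambda>i. (i, m)) ` {..<n}" by auto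
      have ne: "{..<n} \<noteq> {}" using n by (simp add: lessThan_empty_iff)
      have e1: "(\<lambda>i. Phi 0 (i, sphere_base)) ` {..<n} = {sphere_base}"
        using ne by (simp add: Phi_base image_constant_conv)
      have e2: "(\<lambda>i. Phi 0 (i, m)) ` {..<n} = g ` {..<n}"
        by (rule image_cong) (simp_all add: Pm)
      show ?thesis unfolding e image_Un image_image e1 e2 by simp
    qed
    ultimately show ?thesis by simp
  qed
  have gi: "inj_on g {..<n}"
  proof (rule inj_onI)
    fix a b assume "g a = g b"
    then have "g a 1 = g b 1" by simp
    then show "a = b" by (simp add: g_def)
  qed
  have gb: "sphere_base \<notin> g ` {..<n}"
  proof
    assume "sphere_base \<in> g ` {..<n}"
    then obtain a where "sphere_base = g a" by auto
    then have "sphere_base 0 = g a 0" by simp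
    then show False by (simp add: g_def sphere_base_def)
  qed
  have cardI: "card (insert sphere_base (g ` {..<n})) = Suc n"
    using gi gb by (simp add: card_image)
  define Y where "Y = subtopology (powertop_real UNIV) (insert sphere_base (g ` {..<n}))"
  have W: "sphere_wedge n 0 homeomorphic_space Y" using wedge_homeo[of n 0] img by (simp add: Y_def)
  have Yd: "Y = discrete_topology (insert sphere_base (g ` {..<n}))"
  proof (rule finite_topspace_imp_discrete_topology)
    show "topspace Y = insert sphere_base (g ` {..<n})" by (simp add: Y_def)
    show "finite (insert sphere_base (g ` {..<n}))" by simp
    show "Hausdorff_space Y" unfolding Y_def by (rule Hausdorff_space_subtopology[OF Hausdorff_powertop])
  qed
  have vert: "vertices (L00 n) = {..n}" by (auto simp: vertices_def L00_def)
  have R: "realisation 0 (L00 n) = discrete_topology ((\<lambda>v. {(v, \<lambda>i. 0)}) ` {..n})"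
    by (simp add: realisation_def vert)
  have cardR: "card ((\<lambda>v. {(v, \<lambda>i::nat. 0::real)}) ` {..n}) = Suc n"
    by (subst card_image) (auto simp: inj_on_def)
  have "realisation 0 (L00 n) homeomorphic_space Y"
    unfolding R Yd by (rule discrete_homeo) (simp_all add: cardR cardI)
  then show ?thesis using W homeomorphic_space_sym homeomorphic_space_trans by blast
qed

lemma case_kpos:
  assumes k: "0 < k" and n: "1 \<le> n"
  shows "realisation k (LL k n) homeomorphic_space sphere_wedge n k"
proof -
  have R: "realisation k (LL k n) = quotient_topology (XR k n) (real_rel (LL k n))"
    using k by (simp add: realisation_def XR_def)
  have h1: "quotient_topology (XR k n) (real_rel (LL k n)) homeomorphic_space
      subtopology (powertop_real UNIV) (Fm k n ` topspace (XR k n))"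
    by (rule quot_main[OF compact_XR cont_Fm[OF k] Hausdorff_powertop]) (rule rel_iff[OF k])
  have img: "Fm k n ` topspace (XR k n) = Phi k ` topspace (sum_topology (\<lambda>i. nsphere k) {..<n})"
  proof
    show "Fm k n ` topspace (XR k n) \<subseteq> Phi k ` topspace (sum_topology (\<lambda>i. nsphere k) {..<n})"
      using img_sub[OF k] n by auto
    show "Phi k ` topspace (sum_topology (\<lambda>i. nsphere k) {..<n}) \<subseteq> Fm k n ` topspace (XR k n)"
      using img_sup[OF k] by auto
  qed
  have h2: "subtopology (powertop_real UNIV) (Phi k ` topspace (sum_topology (\<lambda>i. nsphere k) {..<n}))
      homeomorphic_space sphere_wedge n k"
    by (subst homeomorphic_space_sym) (rule wedge_homeo)
  show ?thesis unfolding R using homeomorphic_space_trans[OF h1[unfolded img] h2] .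
qed

theorem corollary5p12:
  fixes n k :: nat
  assumes "n \<ge> 1"
  shows "\<exists>L :: nat kgraph. is_kgraph k L \<and> finite_kgraph L \<and>
           realisation k L homeomorphic_space sphere_wedge n k"
proof (cases "k = 0")
  case True
  then show ?thesis using kgraph_L00 finite_L00 case_k0[OF assms] by blast
next
  case False
  then have k: "0 < k" by simp
  show ?thesis using kgraph_LL[OF k] finite_LL case_kpos[OF k assms] by blast
qed


end
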